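(* Let $S$ be a finite set of odd primes and let $E=\{\overline{x}\in\overline{\Gamma}_S : x\in\mathcal{O},\ \mathrm{Nm}(x)\mid m_S\}$. Let $G$ be the abstract group with one generator $a_e$ for each $e\in E$ and relations $a_\sigma a_\tau a_\nu^{-1}=1$ for every triple $(\sigma,\tau,\nu)\in E^3$ with $\sigma\tau=\nu$ in $\overline{\Gamma}_S$. Then the map $a_e\mapsto e$ induces an isomorphism $G\cong\overline{\Gamma}_S$.
   Context: Let $\mathcal{H}$ be the quaternion algebra over $\mathbb{Q}$ with basis $1, I, J, IJ$ and relations $I^2=J^2=-1$, $IJ=-JI$, with reduced norm $\mathrm{Nm}(a+bI+cJ+dIJ)=a^2+b^2+c^2+d^2$. Let $\mathcal{O}$ be the Hurwitz order, the $\mathbb{Z}$-span of $1, I, J, \tfrac12(1+I+J+IJ)$. For a finite set $S$ of primes, let $\mathbb{Z}_S=\mathbb{Z}[1/p : p\in S]$, $m_S=\prod_{p\in S}p$, $\mathcal{O}_S=\mathcal{O}\otimes_{\mathbb{Z}}\mathbb{Z}_S$, $\Gamma_S=\mathcal{O}_S^*$ (the $S$-unit group), and $\overline{\Gamma}_S=\Gamma_S/\mathbb{Z}_S^*$ (units modulo central scalars). For $x\in\mathcal{O}$ with $\mathrm{Nm}(x)\mid m_S$, $x$ is a unit of $\mathcal{O}_S$ and $\overline{x}$ denotes its image in $\overline{\Gamma}_S$. *)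

theory Defs
  imports "HOL-Algebra.Algebra"
begin

datatype quat = Quat (re: rat) (qi: rat) (qj: rat) (qk: rat)

text \<open>Basis 1, I, J, IJ with I^2 = J^2 = -1, IJ = -JI; coordinates (a,b,c,d) = a + bI + cJ + d IJ.\<close>
definition qmul :: "quat \<Rightarrow> quat \<Rightarrow> quat" where
  "qmul x y = Quat
     (re x * re y - qi x * qi y - qj x * qj y - qk x * qk y)
     (re x * qi y + qi x * re y + qj x * qk y - qk x * qj y)
     (re x * qj y - qi x * qk y + qj x * re y + qk x * qi y)
     (re x * qk y + qi x * qj y - qj x * qi y + qk x * re y)"

definition qone :: quat where "qone = Quat 1 0 0 0"

definition qscale :: "rat \<Rightarrow> quat \<Rightarrow> quat" where
  "qscale c x = Quat (c * re x) (c * qi x) (c * qj x) (c * qk x)"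

definition qnorm :: "quat \<Rightarrow> rat" where
  "qnorm x = re x ^ 2 + qi x ^ 2 + qj x ^ 2 + qk x ^ 2"

text \<open>Hurwitz order: Z-span of 1, I, J, (1+I+J+IJ)/2.\<close>
definition hurwitz :: "quat set" where
  "hurwitz = {Quat (of_int n1 + of_int n4 / 2) (of_int n2 + of_int n4 / 2)
                   (of_int n3 + of_int n4 / 2) (of_int n4 / 2) | n1 n2 n3 n4 :: int. True}"

definition mS :: "nat set \<Rightarrow> nat" where "mS S = (\<Prod>p\<in>S. p)"

text \<open>Z_S = Z[1/p : p in S], as a subring of Q.\<close>
definition ZS :: "nat set \<Rightarrow> rat set" where
  "ZS S = {of_int a / of_nat (mS S ^ k) | a k. True}"

definition ZS_units :: "nat set \<Rightarrow> rat set" where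
  "ZS_units S = {c \<in> ZS S. \<exists>d \<in> ZS S. c * d = 1}"

text \<open>O_S = O tensor Z_S, realised as the Z_S-span of O inside the quaternion algebra.\<close>
definition OS :: "nat set \<Rightarrow> quat set" where
  "OS S = {qscale (1 / of_nat (mS S ^ k)) x | x k. x \<in> hurwitz}"

definition GammaS :: "nat set \<Rightarrow> quat set" where
  "GammaS S = {q \<in> OS S. \<exists>r \<in> OS S. qmul q r = qone \<and> qmul r q = qone}"

definition GammaS_grp :: "nat set \<Rightarrow> quat monoid" where
  "GammaS_grp S = \<lparr>carrier = GammaS S, monoid.mult = qmul, one = qone\<rparr>"

definition ZS_scalars :: "nat set \<Rightarrow> quat set" where
  "ZS_scalars S = {Quat c 0 0 0 | c. c \<in> ZS_units S}"

definition GammaS_bar :: "nat set \<Rightarrow> quat set monoid" where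
  "GammaS_bar S = GammaS_grp S Mod ZS_scalars S"

definition Egens :: "nat set \<Rightarrow> quat set set" where
  "Egens S = {ZS_scalars S #>\<^bsub>GammaS_grp S\<^esub> x | x. x \<in> hurwitz \<and>
               (\<exists>n::int. qnorm x = of_int n \<and> n dvd int (mS S))}"

text \<open>Words: letters (a, True) stand for a generator a, (a, False) for its inverse.
  pres_eq R is the congruence on words generated by free cancellation and the relators R.\<close>
inductive pres_eq :: "('a \<times> bool) list set \<Rightarrow> ('a \<times> bool) list \<Rightarrow> ('a \<times> bool) list \<Rightarrow> bool"
  for R where
  pres_refl: "pres_eq R w w"
| pres_sym: "pres_eq R v w \<Longrightarrow> pres_eq R w v"
| pres_trans: "pres_eq R u v \<Longrightarrow> pres_eq R v w \<Longrightarrow> pres_eq R u w"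
| pres_cancel: "pres_eq R (u @ [(x, b), (x, \<not> b)] @ v) (u @ v)"
| pres_rel: "r \<in> R \<Longrightarrow> pres_eq R (u @ r @ v) (u @ v)"

definition pres_class :: "'a set \<Rightarrow> ('a \<times> bool) list set \<Rightarrow> ('a \<times> bool) list \<Rightarrow> ('a \<times> bool) list set" where
  "pres_class A R w = {v \<in> lists (A \<times> UNIV). pres_eq R v w}"

definition pres_mult :: "'a set \<Rightarrow> ('a \<times> bool) list set \<Rightarrow> ('a \<times> bool) list set \<Rightarrow> ('a \<times> bool) list set \<Rightarrow> ('a \<times> bool) list set" where
  "pres_mult A R C D = pres_class A R ((SOME w. w \<in> C) @ (SOME w. w \<in> D))"

definition presented_group :: "'a set \<Rightarrow> ('a \<times> bool) list set \<Rightarrow> ('a \<times> bool) list set monoid" where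
  "presented_group A R = \<lparr>carrier = pres_class A R ` lists (A \<times> UNIV),
     monoid.mult = pres_mult A R,
     one = pres_class A R []\<rparr>"

definition E_relators :: "nat set \<Rightarrow> (quat set \<times> bool) list set" where
  "E_relators S = {[(\<sigma>, True), (\<tau>, True), (\<nu>, False)] | \<sigma> \<tau> \<nu>.
      \<sigma> \<in> Egens S \<and> \<tau> \<in> Egens S \<and> \<nu> \<in> Egens S \<and> \<sigma> \<otimes>\<^bsub>GammaS_bar S\<^esub> \<tau> = \<nu>}"

end

theory Submission
  imports Defs
begin



lemma quat_eq_iff: "x = y \<longleftrightarrow> re x = re y \<and> qi x = qi y \<and> qj x = qj y \<and> qk x = qk y"
  by (cases x; cases y) auto

instantiation quat :: ring_1
begin
definition "zero_quat = Quat 0 0 0 0"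
definition "one_quat = qone"
definition "plus_quat x y = Quat (re x + re y) (qi x + qi y) (qj x + qj y) (qk x + qk y)"
definition "minus_quat x y = Quat (re x - re y) (qi x - qi y) (qj x - qj y) (qk x - qk y)"
definition "uminus_quat x = Quat (- re x) (- qi x) (- qj x) (- qk x)"
definition "times_quat = qmul"
instance
  by standard (simp_all add: quat_eq_iff zero_quat_def one_quat_def plus_quat_def minus_quat_def
      uminus_quat_def times_quat_def qmul_def qone_def algebra_simps)
end

lemma quat_simps[simp]:
  "re 0 = 0" "qi 0 = 0" "qj 0 = 0" "qk 0 = 0"
  "re 1 = 1" "qi 1 = 0" "qj 1 = 0" "qk 1 = 0"
  "re (x + y) = re x + re y" "qi (x + y) = qi x + qi y" "qj (x + y) = qj x + qj y" "qk (x + y) = qk x + qk y"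
  "re (x - y) = re x - re y" "qi (x - y) = qi x - qi y" "qj (x - y) = qj x - qj y" "qk (x - y) = qk x - qk y"
  "re (- x) = - re x" "qi (- x) = - qi x" "qj (- x) = - qj x" "qk (- x) = - qk x"
  by (simp_all add: zero_quat_def one_quat_def plus_quat_def minus_quat_def uminus_quat_def qone_def)

lemma quat_mult_simps[simp]:
  "re (x * y) = re x * re y - qi x * qi y - qj x * qj y - qk x * qk y"
  "qi (x * y) = re x * qi y + qi x * re y + qj x * qk y - qk x * qj y"
  "qj (x * y) = re x * qj y - qi x * qk y + qj x * re y + qk x * qi y"
  "qk (x * y) = re x * qk y + qi x * qj y - qj x * qi y + qk x * re y"
  by (simp_all add: times_quat_def qmul_def)

lemma qmul_eq[simp]: "qmul x y = x * y" by (simp add: times_quat_def)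
lemma qone_eq[simp]: "qone = 1" by (simp add: one_quat_def)

definition sc :: "rat \<Rightarrow> quat" where "sc c = Quat c 0 0 0"

lemma sc_simps[simp]: "re (sc c) = c" "qi (sc c) = 0" "qj (sc c) = 0" "qk (sc c) = 0"
  by (simp_all add: sc_def)

lemma sc_mult: "sc a * sc b = sc (a * b)" by (simp add: quat_eq_iff)
lemma sc_comm: "sc c * x = x * sc c" by (simp add: quat_eq_iff)
lemma sc_1[simp]: "sc 1 = 1" by (simp add: quat_eq_iff)
lemma sc_0[simp]: "sc 0 = 0" by (simp add: quat_eq_iff)
lemma sc_add: "sc (a + b) = sc a + sc b" by (simp add: quat_eq_iff)
lemma sc_diff: "sc (a - b) = sc a - sc b" by (simp add: quat_eq_iff)
lemma sc_inj[simp]: "sc a = sc b \<longleftrightarrow> a = b" by (simp add: quat_eq_iff)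
lemma qscale_sc: "qscale c x = sc c * x" by (simp add: quat_eq_iff qscale_def)

lemma of_nat_quat: "(of_nat n :: quat) = sc (of_nat n)"
  by (induction n) (simp_all add: quat_eq_iff)
lemma of_int_quat: "(of_int n :: quat) = sc (of_int n)"
  by (cases n rule: int_cases) (simp_all add: quat_eq_iff of_nat_quat)

definition cnj :: "quat \<Rightarrow> quat" where "cnj x = Quat (re x) (- qi x) (- qj x) (- qk x)"
lemma cnj_simps[simp]: "re (cnj x) = re x" "qi (cnj x) = - qi x" "qj (cnj x) = - qj x" "qk (cnj x) = - qk x"
  by (simp_all add: cnj_def)

lemma mult_cnj: "x * cnj x = sc (qnorm x)"
  by (simp add: quat_eq_iff qnorm_def power2_eq_square algebra_simps)
lemma cnj_mult: "cnj x * x = sc (qnorm x)"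
  by (simp add: quat_eq_iff qnorm_def power2_eq_square algebra_simps)
lemma cnj_prod: "cnj (x * y) = cnj y * cnj x"
  by (simp add: quat_eq_iff algebra_simps)
lemma cnj_cnj[simp]: "cnj (cnj x) = x" by (simp add: quat_eq_iff)
lemma cnj_sc[simp]: "cnj (sc c) = sc c" by (simp add: quat_eq_iff)
lemma cnj_1[simp]: "cnj 1 = 1" by (simp add: quat_eq_iff)
lemma cnj_add: "cnj (x + y) = cnj x + cnj y" by (simp add: quat_eq_iff)
lemma qnorm_mult: "qnorm (x * y) = qnorm x * qnorm y"
proof -
  have "sc (qnorm (x * y)) = x * (y * cnj y) * cnj x" by (simp add: mult_cnj[symmetric] cnj_prod mult.assoc)
  also have "\<dots> = sc (qnorm x * qnorm y)" 
    by (metis mult.assoc mult_cnj sc_comm sc_mult mult.commute)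
  finally show ?thesis by simp
qed
lemma qnorm_cnj[simp]: "qnorm (cnj x) = qnorm x" by (simp add: qnorm_def)
lemma qnorm_sc[simp]: "qnorm (sc c) = c^2" by (simp add: qnorm_def)
lemma qnorm_1[simp]: "qnorm 1 = 1" by (simp add: qnorm_def)
lemma qnorm_nonneg: "qnorm x \<ge> 0" by (simp add: qnorm_def)
lemma qnorm_eq_0: "qnorm x = 0 \<longleftrightarrow> x = 0"
  by (simp add: qnorm_def quat_eq_iff add_nonneg_eq_0_iff)



definition hq :: "int \<Rightarrow> int \<Rightarrow> int \<Rightarrow> int \<Rightarrow> quat" where
  "hq n1 n2 n3 n4 = Quat (of_int n1 + of_int n4 / 2) (of_int n2 + of_int n4 / 2)
                   (of_int n3 + of_int n4 / 2) (of_int n4 / 2)"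

lemma hurwitz_iff: "x \<in> hurwitz \<longleftrightarrow> (\<exists>n1 n2 n3 n4. x = hq n1 n2 n3 n4)"
  by (auto simp: hurwitz_def hq_def)

lemma hq_mult: "hq n1 n2 n3 n4 * hq m1 m2 m3 m4 = hq
  (- n4*m4 - n4*m3 - n3*m3 + n3*m2 - n2*m4 - n2*m3 - n2*m2 + n1*m1)
  (- n4*m3 + n4*m2 + n3*m4 + n3*m2 - n2*m3 + n2*m1 + n1*m2)
  (n4*m2 + n3*m4 + n3*m2 + n3*m1 - n2*m4 - n2*m3 + n1*m3)
  (n4*m4 + n4*m3 - n4*m2 + n4*m1 - n3*m4 - 2*n3*m2 + n2*m4 + 2*n2*m3 + n1*m4)"
  unfolding hq_def quat_eq_iff quat_mult_simps quat.sel of_int_add of_int_mult of_int_diff of_int_minus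
  by (simp_all add: field_simps)

lemma hurwitz_mult: "x \<in> hurwitz \<Longrightarrow> y \<in> hurwitz \<Longrightarrow> x * y \<in> hurwitz"
  unfolding hurwitz_iff by (elim exE) (simp only: hq_mult, blast)

lemma hurwitz_add: "x \<in> hurwitz \<Longrightarrow> y \<in> hurwitz \<Longrightarrow> x + y \<in> hurwitz"
proof -
  have e: "hq n1 n2 n3 n4 + hq m1 m2 m3 m4 = hq (n1+m1) (n2+m2) (n3+m3) (n4+m4)" for n1 n2 n3 n4 m1 m2 m3 m4
    unfolding hq_def quat_eq_iff quat_simps quat.sel of_int_add by (simp_all add: field_simps)
  assume "x \<in> hurwitz" "y \<in> hurwitz"
  then show ?thesis unfolding hurwitz_iff using e by blast
qed

lemma hurwitz_uminus: "x \<in> hurwitz \<Longrightarrow> - x \<in> hurwitz"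
proof -
  assume "x \<in> hurwitz"
  then obtain n1 n2 n3 n4 where "x = hq n1 n2 n3 n4" by (auto simp: hurwitz_iff)
  then have "- x = hq (-n1) (-n2) (-n3) (-n4)" by (simp add: hq_def quat_eq_iff)
  then show ?thesis by (auto simp: hurwitz_iff)
qed

lemma hurwitz_diff: "x \<in> hurwitz \<Longrightarrow> y \<in> hurwitz \<Longrightarrow> x - y \<in> hurwitz"
  using hurwitz_add[of x "- y"] hurwitz_uminus by simp

lemma hurwitz_sc_int: "sc (of_int n) \<in> hurwitz"
proof -
  have "sc (of_int n) = hq n 0 0 0" by (simp add: hq_def quat_eq_iff)
  then show ?thesis by (auto simp: hurwitz_iff)
qed

lemma hurwitz_0[simp]: "0 \<in> hurwitz" using hurwitz_sc_int[of 0] by simp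
lemma hurwitz_1[simp]: "1 \<in> hurwitz" using hurwitz_sc_int[of 1] by simp

lemma hurwitz_cnj: "x \<in> hurwitz \<Longrightarrow> cnj x \<in> hurwitz"
proof -
  assume "x \<in> hurwitz"
  then obtain n1 n2 n3 n4 where "x = hq n1 n2 n3 n4" by (auto simp: hurwitz_iff)
  then have "cnj x = hq (n1 + n4) (-n2) (-n3) (-n4)" by (simp add: hq_def quat_eq_iff)
  then show ?thesis by (auto simp: hurwitz_iff)
qed

lemma hurwitz_scmult: "x \<in> hurwitz \<Longrightarrow> sc (of_int n) * x \<in> hurwitz"
  by (simp add: hurwitz_mult hurwitz_sc_int)

definition hn :: "quat \<Rightarrow> int" where "hn x = \<lfloor>qnorm x\<rfloor>"

lemma hn_qnorm: "x \<in> hurwitz \<Longrightarrow> of_int (hn x) = qnorm x"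
proof -
  assume "x \<in> hurwitz"
  then obtain n1 n2 n3 n4 where x: "x = hq n1 n2 n3 n4" by (auto simp: hurwitz_iff)
  have "qnorm x = of_int (n1^2 + n2^2 + n3^2 + n4*(n1+n2+n3) + n4^2)"
    unfolding x hq_def qnorm_def quat.sel power2_eq_square of_int_add of_int_mult
    by (simp add: field_simps)
  then show ?thesis by (simp add: hn_def)
qed

lemma hn_mult: "x \<in> hurwitz \<Longrightarrow> y \<in> hurwitz \<Longrightarrow> hn (x * y) = hn x * hn y"
  using hn_qnorm[of x] hn_qnorm[of y] hn_qnorm[of "x*y"] hurwitz_mult[of x y] qnorm_mult[of x y]
  by (metis of_int_eq_iff of_int_mult)

lemma hn_nonneg: "hn x \<ge> 0" by (simp add: hn_def qnorm_nonneg)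
lemma hn_eq_0: "x \<in> hurwitz \<Longrightarrow> hn x = 0 \<longleftrightarrow> x = 0"
  using hn_qnorm[of x] qnorm_eq_0[of x] by (metis of_int_0 of_int_eq_iff)
lemma hn_cnj: "hn (cnj x) = hn x" by (simp add: hn_def)
lemma hn_sc_int: "hn (sc (of_int n)) = n^2" unfolding hn_def qnorm_sc of_int_power[symmetric] floor_of_int ..
lemma hn_1[simp]: "hn 1 = 1" by (simp add: hn_def)
lemma mult_cnj_hn: "x \<in> hurwitz \<Longrightarrow> x * cnj x = sc (of_int (hn x))"
  by (simp add: hn_qnorm mult_cnj)
lemma cnj_mult_hn: "x \<in> hurwitz \<Longrightarrow> cnj x * x = sc (of_int (hn x))"
  by (simp add: hn_qnorm cnj_mult)

section \<open>Rounding and Euclid\<close>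

lemma round_rat: fixes x :: rat
  shows "(x - of_int \<lfloor>x + 1/2\<rfloor>)^2 \<le> 1/4 \<and> ((x - of_int \<lfloor>x + 1/2\<rfloor>)^2 = 1/4 \<longrightarrow> x = of_int \<lfloor>x + 1/2\<rfloor> - 1/2)"
proof -
  define a where "a = \<lfloor>x + 1/2\<rfloor>"
  have 1: "of_int a \<le> x + 1/2" unfolding a_def by (rule of_int_floor_le)
  have 2: "x + 1/2 < of_int a + 1" unfolding a_def by (rule floor_correct[THEN conjunct2, simplified])
  define d where "d = x - of_int a"
  have d1: "- 1/2 \<le> d" "d < 1/2" using 1 2 by (auto simp: d_def)
  have "d^2 \<le> 1/4"
  proof -
    have "d^2 = \<bar>d\<bar>^2" by simp
    also have "\<dots> \<le> (1/2)^2" by (rule power_mono) (use d1 in auto)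
    finally show ?thesis by (simp add: power2_eq_square)
  qed
  moreover have "d^2 = 1/4 \<longrightarrow> d = - 1/2"
  proof
    assume "d^2 = 1/4"
    then have "(d - 1/2) * (d + 1/2) = 0" by (simp add: power2_eq_square algebra_simps)
    then show "d = -1/2" using d1 by auto
  qed
  ultimately show ?thesis by (simp add: d_def a_def algebra_simps)
qed

lemma hurwitz_round: "\<exists>h \<in> hurwitz. qnorm (q - h) < 1"
proof -
  define r where "r = (\<lambda>x::rat. \<lfloor>x + 1/2\<rfloor>)"
  define a1 where "a1 = r (re q)"
  define a2 where "a2 = r (qi q)"
  define a3 where "a3 = r (qj q)"
  define a4 where "a4 = r (qk q)"
  define L where "L = Quat (of_int a1) (of_int a2) (of_int a3) (of_int a4)"
  have L: "L \<in> hurwitz"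
  proof -
    have "L = hq (a1 - a4) (a2 - a4) (a3 - a4) (2 * a4)" by (simp add: L_def hq_def quat_eq_iff)
    then show ?thesis by (auto simp: hurwitz_iff)
  qed
  have R1: "(re q - of_int a1)^2 \<le> 1/4 \<and> ((re q - of_int a1)^2 = 1/4 \<longrightarrow> re q = of_int a1 - 1/2)"
    using round_rat a1_def r_def by auto
  have R2: "(qi q - of_int a2)^2 \<le> 1/4 \<and> ((qi q - of_int a2)^2 = 1/4 \<longrightarrow> qi q = of_int a2 - 1/2)"
    using round_rat a2_def r_def by auto
  have R3: "(qj q - of_int a3)^2 \<le> 1/4 \<and> ((qj q - of_int a3)^2 = 1/4 \<longrightarrow> qj q = of_int a3 - 1/2)"
    using round_rat a3_def r_def by auto
  have R4: "(qk q - of_int a4)^2 \<le> 1/4 \<and> ((qk q - of_int a4)^2 = 1/4 \<longrightarrow> qk q = of_int a4 - 1/2)"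
    using round_rat a4_def r_def by auto
  have nL: "qnorm (q - L) = (re q - of_int a1)^2 + (qi q - of_int a2)^2 + (qj q - of_int a3)^2 + (qk q - of_int a4)^2"
    by (simp add: qnorm_def L_def)
  show ?thesis
  proof (cases "qnorm (q - L) < 1")
    case True then show ?thesis using L by blast
  next
    case False
    then have "(re q - of_int a1)^2 = 1/4 \<and> (qi q - of_int a2)^2 = 1/4 \<and> (qj q - of_int a3)^2 = 1/4 \<and> (qk q - of_int a4)^2 = 1/4"
      using R1 R2 R3 R4 nL by linarith
    then have e: "re q = of_int a1 - 1/2" "qi q = of_int a2 - 1/2" "qj q = of_int a3 - 1/2" "qk q = of_int a4 - 1/2"
      using R1 R2 R3 R4 by auto
    have "q = hq (a1 - a4) (a2 - a4) (a3 - a4) (2 * a4 - 1)"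
      by (simp add: hq_def quat_eq_iff e field_simps)
    then have "q \<in> hurwitz" by (auto simp: hurwitz_iff)
    then show ?thesis by (intro bexI[of _ q]) (auto simp: qnorm_def)
  qed
qed

lemma hurwitz_euclid:
  assumes a: "a \<in> hurwitz" and b: "b \<in> hurwitz" "b \<noteq> 0"
  shows "\<exists>h \<in> hurwitz. hn (a - h * b) < hn b"
proof -
  define q where "q = a * cnj b * sc (1 / qnorm b)"
  have nb: "qnorm b \<noteq> 0" using b qnorm_eq_0 by auto
  have qb: "q * b = a"
  proof -
    have "q * b = a * (cnj b * sc (1 / qnorm b) * b)" by (simp add: q_def mult.assoc)
    also have "cnj b * sc (1 / qnorm b) * b = 1"
      by (simp add: mult.assoc[symmetric] sc_comm[of _ "cnj b", symmetric]) (simp add: mult.assoc cnj_mult sc_mult nb)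
    finally show ?thesis by simp
  qed
  obtain h where h: "h \<in> hurwitz" "qnorm (q - h) < 1" using hurwitz_round by blast
  have "a - h * b = (q - h) * b" using qb by (simp add: algebra_simps)
  then have "qnorm (a - h * b) = qnorm (q - h) * qnorm b" by (simp add: qnorm_mult)
  also have "\<dots> < qnorm b" using h nb qnorm_nonneg[of b] by (simp add: mult_less_cancel_right2 less_le)
  finally have "of_int (hn (a - h * b)) < (of_int (hn b) :: rat)"
    using hn_qnorm a b h hurwitz_diff hurwitz_mult by metis
  then show ?thesis using h by auto
qed

lemma hurwitz_lgcd:
  assumes y1: "y1 \<in> hurwitz" and y2: "y2 \<in> hurwitz" and nz: "y1 \<noteq> 0"
  shows "\<exists>g c d a1 a2. g \<in> hurwitz \<and> c \<in> hurwitz \<and> d \<in> hurwitz \<and> a1 \<in> hurwitz \<and> a2 \<in> hurwitz \<and>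
     g = c * y1 + d * y2 \<and> y1 = a1 * g \<and> y2 = a2 * g"
proof -
  define L where "L = {c * y1 + d * y2 | c d. c \<in> hurwitz \<and> d \<in> hurwitz}"
  have Lh: "l \<in> L \<Longrightarrow> l \<in> hurwitz" for l using y1 y2 by (auto simp: L_def intro!: hurwitz_add hurwitz_mult)
  have y1L: "y1 \<in> L" unfolding L_def by (rule CollectI, rule exI[of _ 1], rule exI[of _ 0]) simp
  have y2L: "y2 \<in> L" unfolding L_def by (rule CollectI, rule exI[of _ 0], rule exI[of _ 1]) simp
  have Lsub: "l \<in> L \<Longrightarrow> h \<in> hurwitz \<Longrightarrow> g \<in> L \<Longrightarrow> l - h * g \<in> L" for l h g
  proof -
    assume "l \<in> L" "h \<in> hurwitz" "g \<in> L"
    then obtain c d c' d' where cd: "l = c * y1 + d * y2" "g = c' * y1 + d' * y2"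
      "c \<in> hurwitz" "d \<in> hurwitz" "c' \<in> hurwitz" "d' \<in> hurwitz" unfolding L_def by blast
    have "l - h * g = (c - h * c') * y1 + (d - h * d') * y2" using cd by (simp add: algebra_simps)
    moreover have "c - h * c' \<in> hurwitz" "d - h * d' \<in> hurwitz"
      using cd \<open>h \<in> hurwitz\<close> by (auto intro!: hurwitz_diff hurwitz_mult)
    ultimately show ?thesis unfolding L_def by blast
  qed
  define P where "P = (\<lambda>n. \<exists>g\<in>L. g \<noteq> 0 \<and> nat (hn g) = n)"
  have "P (nat (hn y1))" using y1L nz unfolding P_def by blast
  then have "P (LEAST n. P n)" by (rule LeastI)
  then obtain g where g: "g \<in> L" "g \<noteq> 0" "nat (hn g) = (LEAST n. P n)" unfolding P_def by blast
  have gmin: "l \<in> L \<Longrightarrow> l \<noteq> 0 \<Longrightarrow> hn g \<le> hn l" for l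
  proof -
    assume "l \<in> L" "l \<noteq> 0"
    then have "P (nat (hn l))" unfolding P_def by blast
    then have "(LEAST n. P n) \<le> nat (hn l)" by (rule Least_le)
    then show ?thesis using g hn_nonneg[of g] hn_nonneg[of l] by linarith
  qed
  have div: "l \<in> L \<Longrightarrow> \<exists>a\<in>hurwitz. l = a * g" for l
  proof -
    assume l: "l \<in> L"
    obtain h where h: "h \<in> hurwitz" "hn (l - h * g) < hn g"
      using hurwitz_euclid[OF Lh[OF l] Lh[OF g(1)] g(2)] by blast
    have "l - h * g \<in> L" using Lsub l h g by blast
    then have "l - h * g = 0" using gmin h by force
    then show ?thesis using h by (intro bexI[of _ h]) auto
  qed
  obtain c d where cd: "g = c * y1 + d * y2" "c \<in> hurwitz" "d \<in> hurwitz" using g(1) unfolding L_def by blast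
  obtain a1 a2 where "a1 \<in> hurwitz" "a2 \<in> hurwitz" "y1 = a1 * g" "y2 = a2 * g" using div y1L y2L by blast
  then show ?thesis using cd Lh g(1) by blast
qed




lemma sc_mid: "a * sc c * x = sc c * (a * x)"
  by (metis sc_comm mult.assoc)
lemma sc_mid2: "a * (sc c * x) = sc c * (a * x)"
  by (metis sc_comm mult.assoc)

definition pdv :: "int \<Rightarrow> quat \<Rightarrow> bool" where
  "pdv p x \<longleftrightarrow> (\<exists>w\<in>hurwitz. x = sc (of_int p) * w)"

lemma divisors_prime_sq:
  fixes p d :: int
  assumes "Factorial_Ring.prime p" "d \<ge> 0" "d dvd p^2"
  shows "d = 1 \<or> d = p \<or> d = p^2"
proof -
  obtain m where "m \<le> 2" "normalize d = p^m" using divides_primepow[OF assms(1) assms(3)] by blast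
  moreover have "normalize d = d" using assms(2) by simp
  ultimately show ?thesis by (cases m; cases "m - 1") (auto simp: power2_eq_square)
qed

lemma divisors_prime:
  fixes p d :: int
  assumes "Factorial_Ring.prime p" "d \<ge> 0" "d dvd p"
  shows "d = 1 \<or> d = p"
proof -
  obtain m where "m \<le> 1" "normalize d = p^m" using divides_primepow[OF assms(1), of d 1] assms(3) by auto
  moreover have "normalize d = d" using assms(2) by simp
  ultimately show ?thesis by (cases m) auto
qed

lemma pdv_hn: "pdv p x \<Longrightarrow> p^2 dvd hn x"
  unfolding pdv_def using hn_mult hn_sc_int hurwitz_sc_int by fastforce

lemma unit_cnj: "u \<in> hurwitz \<Longrightarrow> hn u = 1 \<Longrightarrow> cnj u * u = 1 \<and> u * cnj u = 1"
  using mult_cnj_hn cnj_mult_hn by simp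

lemma pdv_cnj: "pdv p x \<Longrightarrow> pdv p (cnj x)"
  unfolding pdv_def by (auto simp: cnj_prod sc_comm intro: hurwitz_cnj)

lemma pdv_lmult: "y \<in> hurwitz \<Longrightarrow> pdv p x \<Longrightarrow> pdv p (y * x)"
  unfolding pdv_def by (metis hurwitz_mult mult.assoc sc_comm)

lemma pdv_rmult: "y \<in> hurwitz \<Longrightarrow> pdv p x \<Longrightarrow> pdv p (x * y)"
  unfolding pdv_def by (metis hurwitz_mult mult.assoc)

lemma pdv_add: "pdv p x \<Longrightarrow> pdv p y \<Longrightarrow> pdv p (x + y)"
  unfolding pdv_def by (metis hurwitz_add distrib_left)

lemma pdv_sc: "x \<in> hurwitz \<Longrightarrow> pdv p (sc (of_int p) * x)"
  unfolding pdv_def by blast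

lemma pdv_coprime:
  assumes x: "x \<in> hurwitz" and d: "pdv p (sc (of_int n) * x)" and c: "coprime n p"
  shows "pdv p x"
proof -
  obtain u v where uv: "u * n + v * p = 1" using c bezout_int[of n p] by (auto simp: coprime_iff_gcd_eq_1)
  have "x = sc (of_int u) * (sc (of_int n) * x) + sc (of_int p) * (sc (of_int v) * x)"
  proof -
    have "x = sc (of_int (u * n + v * p)) * x" using uv by simp
    also have "\<dots> = sc (of_int u) * (sc (of_int n) * x) + sc (of_int p) * (sc (of_int v) * x)"
      by (simp add: sc_add sc_mult distrib_right mult.assoc[symmetric] mult.commute)
    finally show ?thesis .
  qed
  moreover have "pdv p (sc (of_int u) * (sc (of_int n) * x))" by (rule pdv_lmult[OF hurwitz_sc_int d])
  moreover have "pdv p (sc (of_int p) * (sc (of_int v) * x))" using x by (intro pdv_sc hurwitz_scmult)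
  ultimately show ?thesis by (metis pdv_add)
qed

lemma pdv_cancel_right:
  assumes x: "x \<in> hurwitz" and b: "b \<in> hurwitz" and d: "pdv p (x * b)" and c: "coprime (hn b) p"
  shows "pdv p x"
proof -
  have "pdv p (x * b * cnj b)" by (rule pdv_rmult[OF hurwitz_cnj[OF b] d])
  moreover have "x * b * cnj b = sc (of_int (hn b)) * x" by (simp add: mult.assoc mult_cnj_hn[OF b] sc_comm)
  ultimately have "pdv p (sc (of_int (hn b)) * x)" by simp
  then show ?thesis using pdv_coprime x c by blast
qed

lemma pdv_unit_left:
  assumes "u \<in> hurwitz" "hn u = 1" "pdv p (u * x)" shows "pdv p x"
proof -
  have "pdv p (cnj u * (u * x))" by (rule pdv_lmult[OF hurwitz_cnj[OF assms(1)] assms(3)])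
  moreover have "cnj u * (u * x) = x" using unit_cnj[OF assms(1,2)] by (metis mult.assoc mult_1_left)
  ultimately show ?thesis by simp
qed

lemma not_pdv_prime:
  assumes "Factorial_Ring.prime p" "hn x = p" shows "\<not> pdv p x"
proof
  assume "pdv p x"
  then have "p^2 dvd p" using pdv_hn assms by metis
  then have "p * p dvd p * 1" by (simp add: power2_eq_square)
  then have "p dvd 1" using assms(1) by (subst (asm) dvd_mult_cancel_left) (auto simp: prime_def)
  then show False using assms(1) not_prime_unit by blast
qed

lemma sc_p_cancel: "p \<noteq> 0 \<Longrightarrow> sc (of_int p) * x = sc (of_int p) * y \<Longrightarrow> x = y"
proof -
  assume "p \<noteq> 0" "sc (of_int p) * x = sc (of_int p) * y"
  then have "sc (1 / of_int p) * (sc (of_int p) * x) = sc (1 / of_int p) * (sc (of_int p) * y)" by simp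
  then show "x = y" using \<open>p \<noteq> 0\<close> by (simp add: mult.assoc[symmetric] sc_mult)
qed

lemma unique_right_divisor:
  assumes p: "Factorial_Ring.prime p" and z: "z \<in> hurwitz" "\<not> pdv p z"
    and ab: "a \<in> hurwitz" "b \<in> hurwitz" and y: "y1 \<in> hurwitz" "y2 \<in> hurwitz" "hn y1 = p" "hn y2 = p"
    and e: "z = a * y1" "z = b * y2"
  shows "\<exists>u\<in>hurwitz. hn u = 1 \<and> y1 = u * y2"
proof -
  have "y1 \<noteq> 0" using y(3) p by (auto simp: hn_def qnorm_def)
  then obtain g c d a1 a2 where gg: "g \<in> hurwitz" "c \<in> hurwitz" "d \<in> hurwitz" "a1 \<in> hurwitz" "a2 \<in> hurwitz"
     "g = c * y1 + d * y2" "y1 = a1 * g" "y2 = a2 * g"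
    using hurwitz_lgcd[OF y(1,2)] by blast
  have "hn y1 = hn a1 * hn g" using hn_mult[OF gg(4) gg(1)] gg(7) by simp
  then have "hn g dvd p" using y by simp
  then have "hn g = 1 \<or> hn g = p" using divisors_prime[OF p hn_nonneg] by blast
  then show ?thesis
  proof
    assume g1: "hn g = 1"
    have "1 = cnj g * g" using unit_cnj[OF gg(1) g1] by simp
    also have "\<dots> = (cnj g * c) * y1 + (cnj g * d) * y2" using gg(6) by (simp add: algebra_simps)
    finally have "1 = cnj (cnj g * c * y1 + cnj g * d * y2)" by simp
    then have one: "1 = cnj y1 * cnj (cnj g * c) + cnj y2 * cnj (cnj g * d)" by (simp add: cnj_add cnj_prod)
    have z1: "z = z * cnj y1 * cnj (cnj g * c) + z * cnj y2 * cnj (cnj g * d)"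
      by (subst mult_1_right[symmetric], subst one) (simp add: distrib_left mult.assoc)
    have z2: "z * cnj y1 * cnj (cnj g * c) = sc (of_int p) * (a * cnj (cnj g * c))"
      using e(1) y(1,3) by (simp add: mult.assoc mult_cnj_hn sc_mid2)
    have z3: "z * cnj y2 * cnj (cnj g * d) = sc (of_int p) * (b * cnj (cnj g * d))"
      using e(2) y(2,4) by (simp add: mult.assoc mult_cnj_hn sc_mid2)
    have "z = sc (of_int p) * (a * cnj (cnj g * c) + b * cnj (cnj g * d))"
      using z1 z2 z3 by (simp add: distrib_left)
    moreover have "a * cnj (cnj g * c) + b * cnj (cnj g * d) \<in> hurwitz" using gg(1-3) ab
      by (auto intro!: hurwitz_add hurwitz_mult hurwitz_cnj)
    ultimately have "pdv p z" unfolding pdv_def by blast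
    with z show ?thesis by simp
  next
    assume gp: "hn g = p"
    have "p * hn a1 = p * 1" using hn_mult[OF gg(4) gg(1)] gg(7) y(3) gp by (simp add: mult.commute)
    moreover have "p * hn a2 = p * 1" using hn_mult[OF gg(5) gg(1)] gg(8) y(4) gp by (simp add: mult.commute)
    ultimately have u1: "hn a1 = 1" "hn a2 = 1" using p by (auto simp: prime_def)
    have "(a1 * cnj a2) * y2 = a1 * (cnj a2 * a2) * g" using gg(8) by (simp add: mult.assoc)
    also have "\<dots> = y1" using gg(7) unit_cnj[OF gg(5) u1(2)] by simp
    finally have "y1 = (a1 * cnj a2) * y2" by simp
    moreover have "hn (a1 * cnj a2) = 1" using u1 gg(4,5) by (simp add: hn_mult hurwitz_cnj hn_cnj)
    moreover have "a1 * cnj a2 \<in> hurwitz" using gg(4,5) by (auto intro: hurwitz_mult hurwitz_cnj)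
    ultimately show ?thesis by blast
  qed
qed

lemma right_divisor_exists:
  assumes p: "Factorial_Ring.prime p" and z: "z \<in> hurwitz" "\<not> pdv p z" and dv: "p dvd hn z"
  shows "\<exists>a y. a \<in> hurwitz \<and> y \<in> hurwitz \<and> hn y = p \<and> z = a * y"
proof -
  have p0: "p \<noteq> 0" using p by (auto simp: prime_def)
  have "sc (of_int p) \<noteq> 0" using p0 by (simp add: quat_eq_iff)
  then obtain g c d a1 a2 where gg: "g \<in> hurwitz" "c \<in> hurwitz" "d \<in> hurwitz" "a1 \<in> hurwitz" "a2 \<in> hurwitz"
     "g = c * sc (of_int p) + d * z" "sc (of_int p) = a1 * g" "z = a2 * g"
    using hurwitz_lgcd[OF hurwitz_sc_int z(1)] by blast
  have "p^2 = hn a1 * hn g" using hn_mult[OF gg(4) gg(1)] gg(7) hn_sc_int[of p] by simp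
  then have "hn g dvd p^2" by simp
  then have "hn g = 1 \<or> hn g = p \<or> hn g = p^2" using divisors_prime_sq[OF p hn_nonneg] by blast
  moreover have "hn g \<noteq> 1"
  proof
    assume g1: "hn g = 1"
    have "1 = cnj g * g" using unit_cnj[OF gg(1) g1] by simp
    also have "\<dots> = (cnj g * c) * sc (of_int p) + (cnj g * d) * z" using gg(6) by (simp add: algebra_simps)
    finally have "cnj z = ((cnj g * c) * sc (of_int p) + (cnj g * d) * z) * cnj z" by simp
    also have "\<dots> = sc (of_int p) * (cnj g * c * cnj z) + cnj g * d * sc (of_int (hn z))"
      using z by (simp add: distrib_right mult.assoc mult_cnj_hn sc_mid2)
    finally have eq: "cnj z = sc (of_int p) * (cnj g * c * cnj z) + cnj g * d * sc (of_int (hn z))" .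
    obtain k where k: "hn z = p * k" using dv by blast
    have "cnj g * d * sc (of_int (hn z)) = sc (of_int p) * (cnj g * d * sc (of_int k))"
      by (simp add: k sc_mult[symmetric] mult.assoc sc_mid2)
    then have "cnj z = sc (of_int p) * (cnj g * c * cnj z + cnj g * d * sc (of_int k))"
      using eq by (simp add: distrib_left)
    moreover have "cnj g * c * cnj z + cnj g * d * sc (of_int k) \<in> hurwitz" using gg(1-3) z(1)
      by (auto intro!: hurwitz_add hurwitz_mult hurwitz_cnj hurwitz_sc_int)
    ultimately have "pdv p (cnj z)" unfolding pdv_def by blast
    then have "pdv p z" using pdv_cnj by fastforce
    with z show False by simp
  qed
  moreover have "hn g \<noteq> p^2"
  proof
    assume "hn g = p^2"
    then have "p^2 * hn a1 = p^2 * 1" using \<open>p^2 = hn a1 * hn g\<close> by (simp add: mult.commute)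
    then have u: "hn a1 = 1" using p0 by simp
    have "cnj a1 * sc (of_int p) = cnj a1 * a1 * g" using gg(7) by (simp add: mult.assoc)
    then have "g = cnj a1 * sc (of_int p)" using unit_cnj[OF gg(4) u] by simp
    then have "z = sc (of_int p) * (a2 * cnj a1)" using gg(8) by (metis mult.assoc sc_comm)
    moreover have "a2 * cnj a1 \<in> hurwitz" using gg(4,5) by (blast intro: hurwitz_mult hurwitz_cnj)
    ultimately have "pdv p z" unfolding pdv_def by blast
    with z show False by simp
  qed
  ultimately have "hn g = p" by blast
  then show ?thesis using gg by blast
qed

lemma nonbacktrack:
  assumes p: "Factorial_Ring.prime p"
  shows "xs \<noteq> [] \<Longrightarrow> (\<forall>x\<in>set xs. x \<in> hurwitz \<and> hn x = p) \<Longrightarrow> successively (\<lambda>x y. \<not> pdv p (x * y)) xs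
     \<Longrightarrow> \<not> pdv p (prod_list xs)"
proof (induction xs rule: rev_induct)
  case Nil then show ?case by simp
next
  case (snoc x xs)
  show ?case
  proof (cases "xs = []")
    case True then show ?thesis using snoc not_pdv_prime[OF p] by simp
  next
    case False
    then obtain ys y where xs: "xs = ys @ [y]" by (metis rev_exhaust)
    have Z: "\<not> pdv p (prod_list xs)" using snoc False by (simp add: successively_append_iff)
    have yx: "\<not> pdv p (y * x)" using snoc.prems(3) xs by (simp add: successively_append_iff)
    have H: "\<forall>x\<in>set xs. x \<in> hurwitz" using snoc by auto
    have prodH: "\<forall>xs. (\<forall>x\<in>set xs. x \<in> hurwitz) \<longrightarrow> prod_list xs \<in> hurwitz"
    proof
      fix xs :: "quat list" show "(\<forall>x\<in>set xs. x \<in> hurwitz) \<longrightarrow> prod_list xs \<in> hurwitz"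
        by (induction xs) (auto intro: hurwitz_mult)
    qed
    have ZH: "prod_list xs \<in> hurwitz" using prodH H by blast
    have xH: "x \<in> hurwitz" "hn x = p" using snoc by auto
    have yH: "y \<in> hurwitz" "hn y = p" using snoc xs by auto
    have ysH: "prod_list ys \<in> hurwitz" using prodH H xs by auto
    show ?thesis
    proof
      assume "pdv p (prod_list (xs @ [x]))"
      then obtain w where w: "w \<in> hurwitz" "prod_list xs * x = sc (of_int p) * w" by (auto simp: pdv_def)
      have "sc (of_int p) * prod_list xs = prod_list xs * x * cnj x"
        using mult_cnj_hn[OF xH(1)] xH(2) by (metis mult.assoc sc_comm)
      also have "\<dots> = sc (of_int p) * (w * cnj x)" using w by (simp add: mult.assoc)
      finally have Zw: "prod_list xs = w * cnj x" using sc_p_cancel p by (metis not_prime_0)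
      have "prod_list xs = prod_list ys * y" using xs by simp
      then obtain u where u: "u \<in> hurwitz" "hn u = 1" "y = u * cnj x"
        using unique_right_divisor[OF p ZH Z ysH w(1) yH(1) hurwitz_cnj[OF xH(1)] yH(2)] xH Zw
        by (auto simp: hn_cnj)
      then have "y * x = sc (of_int p) * u" using cnj_mult_hn[OF xH(1)] xH(2) by (metis mult.assoc sc_comm)
      then have "pdv p (y * x)" using u unfolding pdv_def by blast
      with yx show False by simp
    qed
  qed
qed




lemma mS_pos: "finite S \<Longrightarrow> \<forall>p\<in>S. Factorial_Ring.prime p \<Longrightarrow> mS S > 0"
  unfolding mS_def by (auto intro!: prod_pos simp: prime_gt_0_nat)

locale QS =
  fixes S :: "nat set"
  assumes finS: "finite S" and primeS: "\<forall>p\<in>S. Factorial_Ring.prime p"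
begin

abbreviation "m \<equiv> mS S"
abbreviation "M \<equiv> int (mS S)"
abbreviation "G \<equiv> GammaS_grp S"
abbreviation "Z \<equiv> ZS_scalars S"

lemma m_pos: "m > 0" using mS_pos finS primeS by blast
lemma M_pos: "M > 0" using m_pos by simp

lemma G_simps[simp]: "carrier G = GammaS S" "monoid.mult G = (*)" "one G = 1"
  by (simp_all add: GammaS_grp_def fun_eq_iff)

lemma GammaS_iff: "q \<in> GammaS S \<longleftrightarrow> q \<in> OS S \<and> (\<exists>r\<in>OS S. q * r = 1 \<and> r * q = 1)"
  by (simp add: GammaS_def)

lemma OS_iff: "q \<in> OS S \<longleftrightarrow> (\<exists>x k. x \<in> hurwitz \<and> q = sc (1 / of_nat (m ^ k)) * x)"
  by (auto simp: OS_def qscale_sc)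

lemma OS_mult: "q \<in> OS S \<Longrightarrow> r \<in> OS S \<Longrightarrow> q * r \<in> OS S"
proof -
  assume "q \<in> OS S" "r \<in> OS S"
  then obtain x k y j where xy: "x \<in> hurwitz" "y \<in> hurwitz" "q = sc (1 / of_nat (m ^ k)) * x"
    "r = sc (1 / of_nat (m ^ j)) * y" by (auto simp: OS_iff)
  have "q * r = sc (1 / of_nat (m ^ k)) * sc (1 / of_nat (m ^ j)) * (x * y)"
    using xy by (metis mult.assoc sc_comm)
  also have "\<dots> = sc (1 / of_nat (m ^ (k + j))) * (x * y)" by (simp add: sc_mult power_add)
  finally show ?thesis using xy hurwitz_mult by (auto simp: OS_iff)
qed

lemma OS_hurwitz: "x \<in> hurwitz \<Longrightarrow> x \<in> OS S"
  unfolding OS_iff by (rule exI[of _ x], rule exI[of _ 0]) simp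

lemma OS_sc: "x \<in> hurwitz \<Longrightarrow> sc (1 / of_nat (m ^ k)) * x \<in> OS S"
  unfolding OS_iff by blast

lemma GammaS_mult: "q \<in> GammaS S \<Longrightarrow> r \<in> GammaS S \<Longrightarrow> q * r \<in> GammaS S"
proof -
  assume "q \<in> GammaS S" "r \<in> GammaS S"
  then obtain q' r' where "q \<in> OS S" "r \<in> OS S" "q' \<in> OS S" "r' \<in> OS S" "q * q' = 1" "q' * q = 1"
    "r * r' = 1" "r' * r = 1" by (auto simp: GammaS_iff)
  moreover have "q * r * (r' * q') = q * (r * r') * q'" "r' * q' * (q * r) = r' * (q' * q) * r"
    by (simp_all add: mult.assoc)
  ultimately show ?thesis unfolding GammaS_iff by (auto intro!: OS_mult)
qed

lemma GammaS_1: "1 \<in> GammaS S"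
  unfolding GammaS_iff using OS_hurwitz[OF hurwitz_1] by force

lemma group_G: "group G"
proof (rule groupI)
  show "\<And>x y. x \<in> carrier G \<Longrightarrow> y \<in> carrier G \<Longrightarrow> x \<otimes>\<^bsub>G\<^esub> y \<in> carrier G" by (simp add: GammaS_mult)
  show "\<one>\<^bsub>G\<^esub> \<in> carrier G" by (simp add: GammaS_1)
  show "\<And>x y z. x \<in> carrier G \<Longrightarrow> y \<in> carrier G \<Longrightarrow> z \<in> carrier G \<Longrightarrow>
      x \<otimes>\<^bsub>G\<^esub> y \<otimes>\<^bsub>G\<^esub> z = x \<otimes>\<^bsub>G\<^esub> (y \<otimes>\<^bsub>G\<^esub> z)" by (simp add: mult.assoc)
  show "\<And>x. x \<in> carrier G \<Longrightarrow> \<one>\<^bsub>G\<^esub> \<otimes>\<^bsub>G\<^esub> x = x" by simp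
  show "\<And>x. x \<in> carrier G \<Longrightarrow> \<exists>y\<in>carrier G. y \<otimes>\<^bsub>G\<^esub> x = \<one>\<^bsub>G\<^esub>"
  proof -
    fix x assume "x \<in> carrier G"
    then obtain r where "x \<in> OS S" "r \<in> OS S" "x * r = 1" "r * x = 1" by (auto simp: GammaS_iff)
    then have "r \<in> GammaS S" unfolding GammaS_iff by blast
    then show "\<exists>y\<in>carrier G. y \<otimes>\<^bsub>G\<^esub> x = \<one>\<^bsub>G\<^esub>" using \<open>r * x = 1\<close> by auto
  qed
qed

lemma zsu_int: assumes "n dvd M ^ N" shows "(of_int n :: rat) \<in> ZS_units S" "1 / (of_int n :: rat) \<in> ZS_units S"
proof -
  obtain t where t: "M ^ N = n * t" using assms by blast
  have n0: "n \<noteq> 0"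
  proof
    assume "n = 0" then have "M ^ N = 0" using t by simp
    then show False using M_pos by simp
  qed
  have a: "(of_int n :: rat) \<in> ZS S" unfolding ZS_def by (rule CollectI, rule exI[of _ n], rule exI[of _ 0]) simp
  have mN: "(of_nat (m ^ N) :: rat) = of_int n * of_int t"
  proof -
    have "(of_nat (m ^ N) :: rat) = of_int (M ^ N)" by simp
    also have "\<dots> = of_int n * of_int t" using t by simp
    finally show ?thesis .
  qed
  have t0: "t \<noteq> 0" using mN m_pos by auto
  have "1 / (of_int n :: rat) = of_int t / of_nat (m ^ N)"
    unfolding mN using t0 by simp
  then have b: "1 / (of_int n :: rat) \<in> ZS S" unfolding ZS_def by blast
  have c: "(of_int n :: rat) * (1 / of_int n) = 1" "(1 / of_int n :: rat) * of_int n = 1" using n0 by simp_all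
  show "(of_int n :: rat) \<in> ZS_units S" unfolding ZS_units_def using a b c(1) by blast
  show "1 / (of_int n :: rat) \<in> ZS_units S" unfolding ZS_units_def using a b c(2) by blast
qed

lemma zsu_m: "1 / (of_nat (m ^ k) :: rat) \<in> ZS_units S"
  using zsu_int(2)[of "M ^ k" k] by simp

lemma ZS_units_cases: "c \<in> ZS_units S \<Longrightarrow> \<exists>d \<in> ZS_units S. c * d = 1"
  unfolding ZS_units_def by (auto simp: mult.commute)

lemma ZS_units_mult: "c \<in> ZS_units S \<Longrightarrow> d \<in> ZS_units S \<Longrightarrow> c * d \<in> ZS_units S"
proof -
  have ZSm: "a \<in> ZS S \<Longrightarrow> b \<in> ZS S \<Longrightarrow> a * b \<in> ZS S" for a b
  proof -
    assume "a \<in> ZS S" "b \<in> ZS S"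
    then obtain x k y j where "a = of_int x / of_nat (m ^ k)" "b = of_int y / of_nat (m ^ j)"
      unfolding ZS_def by blast
    then have "a * b = of_int (x * y) / of_nat (m ^ (k + j))" by (simp add: power_add)
    then show ?thesis unfolding ZS_def by blast
  qed
  assume "c \<in> ZS_units S" "d \<in> ZS_units S"
  then obtain c' d' where "c \<in> ZS S" "d \<in> ZS S" "c' \<in> ZS S" "d' \<in> ZS S" "c * c' = 1" "d * d' = 1"
    unfolding ZS_units_def by blast
  moreover have "c * d * (c' * d') = (c * c') * (d * d')" by (simp add: algebra_simps)
  ultimately show ?thesis unfolding ZS_units_def by (auto intro!: ZSm)
qed

lemma sc_GammaS: "c \<in> ZS_units S \<Longrightarrow> sc c \<in> GammaS S"
proof -
  have ZOS: "a \<in> ZS S \<Longrightarrow> sc a \<in> OS S" for a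
  proof -
    assume "a \<in> ZS S"
    then obtain x k where "a = of_int x / of_nat (m ^ k)" unfolding ZS_def by blast
    then have "sc a = sc (1 / of_nat (m ^ k)) * sc (of_int x)" by (simp add: sc_mult)
    then show ?thesis using OS_sc[OF hurwitz_sc_int] by simp
  qed
  assume "c \<in> ZS_units S"
  then obtain d where "c \<in> ZS S" "d \<in> ZS S" "c * d = 1" unfolding ZS_units_def by blast
  moreover have "sc c * sc d = 1" "sc d * sc c = 1" using \<open>c * d = 1\<close> by (simp_all add: sc_mult mult.commute)
  ultimately show ?thesis unfolding GammaS_iff using ZOS by blast
qed

lemma Z_iff: "z \<in> Z \<longleftrightarrow> (\<exists>c \<in> ZS_units S. z = sc c)"
  by (auto simp: ZS_scalars_def sc_def)

lemma subgroup_Z: "subgroup Z G"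
proof (rule group.subgroupI[OF group_G])
  show "Z \<subseteq> carrier G" using sc_GammaS by (auto simp: Z_iff)
  show "Z \<noteq> {}" using zsu_int(1)[of 1 0] Z_iff by force
  show "\<And>a. a \<in> Z \<Longrightarrow> inv\<^bsub>G\<^esub> a \<in> Z"
  proof -
    fix a assume "a \<in> Z"
    then obtain c where c: "c \<in> ZS_units S" "a = sc c" by (auto simp: Z_iff)
    then obtain d where d: "d \<in> ZS_units S" "c * d = 1" using ZS_units_cases by blast
    have "inv\<^bsub>G\<^esub> a = sc d"
      using c d sc_GammaS by (intro group.inv_equality[OF group_G]) (auto simp: sc_mult mult.commute)
    then show "inv\<^bsub>G\<^esub> a \<in> Z" using d by (auto simp: Z_iff)
  qed
  show "\<And>a b. a \<in> Z \<Longrightarrow> b \<in> Z \<Longrightarrow> a \<otimes>\<^bsub>G\<^esub> b \<in> Z"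
    by (auto simp: Z_iff sc_mult intro: ZS_units_mult)
qed

lemma normal_Z: "Z \<lhd> G"
proof (rule group.normalI[OF group_G subgroup_Z], intro ballI)
  fix x assume "x \<in> carrier G"
  show "Z #>\<^bsub>G\<^esub> x = x <#\<^bsub>G\<^esub> Z"
  proof -
    have comm: "\<forall>h\<in>Z. h * x = x * h" by (auto simp: Z_iff sc_comm)
    show ?thesis unfolding r_coset_def l_coset_def G_simps using comm by auto
  qed
qed

lemma group_B: "group (GammaS_bar S)"
  unfolding GammaS_bar_def by (rule normal.factorgroup_is_group[OF normal_Z])

end



section \<open>Generic facts on presented groups\<close>

lemma pres_cong: "pres_eq R v w \<Longrightarrow> pres_eq R (pa @ v @ pb) (pa @ w @ pb)"
proof (induction rule: pres_eq.induct)
  case (pres_refl w) then show ?case by (rule pres_eq.pres_refl)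
next
  case (pres_sym v w) then show ?case by (blast intro: pres_eq.pres_sym)
next
  case (pres_trans u v w) then show ?case by (blast intro: pres_eq.pres_trans)
next
  case (pres_cancel u x b v)
  then show ?case using pres_eq.pres_cancel[of R "pa @ u" x b "v @ pb"] by simp
next
  case (pres_rel r u v)
  then show ?case using pres_eq.pres_rel[of r R "pa @ u" "v @ pb"] by simp
qed

lemma pres_cong2: "pres_eq R v w \<Longrightarrow> pres_eq R (v @ b) (w @ b)"
  using pres_cong[of R v w "[]" b] by simp

lemma pres_cong1: "pres_eq R v w \<Longrightarrow> pres_eq R (a @ v) (a @ w)"
  using pres_cong[of R v w a "[]"] by simp

lemma pres_cons: "pres_eq R v w \<Longrightarrow> pres_eq R (x # v) (x # w)"
  using pres_cong1[of R v w "[x]"] by simp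

lemma pres_rel3:
  assumes "[(s, True), (t, True), (n, False)] \<in> R"
  shows "pres_eq R [(s, True), (t, True)] [(n, True)]"
proof -
  have "pres_eq R ([(s, True), (t, True)] @ [(n, False), (n, \<not> False)] @ []) ([(s, True), (t, True)] @ [])"
    by (rule pres_eq.pres_cancel)
  then have 1: "pres_eq R [(s, True), (t, True)] [(s, True), (t, True), (n, False), (n, True)]"
    by (simp add: pres_eq.pres_sym)
  have "pres_eq R ([] @ [(s, True), (t, True), (n, False)] @ [(n, True)]) ([] @ [(n, True)])"
    by (rule pres_eq.pres_rel[OF assms])
  then have 2: "pres_eq R [(s, True), (t, True), (n, False), (n, True)] [(n, True)]" by simp
  show ?thesis by (rule pres_eq.pres_trans[OF 1 2])
qed

definition invw :: "('a \<times> bool) list \<Rightarrow> ('a \<times> bool) list" where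
  "invw w = rev (map (\<lambda>(a, b). (a, \<not> b)) w)"

lemma invw_simps[simp]: "invw [] = []" "invw (x # w) = invw w @ [(fst x, \<not> snd x)]"
  by (auto simp: invw_def split: prod.splits)

lemma invw_cancel: "pres_eq R (w @ invw w) []"
proof (induction w)
  case Nil then show ?case by (simp add: pres_eq.pres_refl)
next
  case (Cons x w)
  obtain a b where x: "x = (a, b)" by (cases x)
  have "pres_eq R ([x] @ (w @ invw w) @ [(a, \<not> b)]) ([x] @ [] @ [(a, \<not> b)])"
    by (rule pres_cong[OF Cons.IH])
  moreover have "pres_eq R ([] @ [(a, b), (a, \<not> b)] @ []) ([] @ [])" by (rule pres_eq.pres_cancel)
  ultimately show ?case using x by (auto intro: pres_eq.pres_trans)
qed

lemma invw_cancel2: "pres_eq R (invw w @ w) []"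
proof -
  have "invw (invw w) = w" by (induction w) (auto simp: invw_def)
  then show ?thesis using invw_cancel[of R "invw w"] by simp
qed

lemma invw_lists: "w \<in> lists (A \<times> UNIV) \<Longrightarrow> invw w \<in> lists (A \<times> UNIV)"
  by (induction w) auto

definition ltr :: "('g, 'b) monoid_scheme \<Rightarrow> 'g \<times> bool \<Rightarrow> 'g" where
  "ltr H l = (if snd l then (if fst l \<in> carrier H then fst l else \<one>\<^bsub>H\<^esub>)
               else inv\<^bsub>H\<^esub> (if fst l \<in> carrier H then fst l else \<one>\<^bsub>H\<^esub>))"

definition ev :: "('g, 'b) monoid_scheme \<Rightarrow> ('g \<times> bool) list \<Rightarrow> 'g" where
  "ev H w = foldr (\<lambda>l acc. ltr H l \<otimes>\<^bsub>H\<^esub> acc) w \<one>\<^bsub>H\<^esub>"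

context group
begin

lemma ltr_carrier: "ltr G l \<in> carrier G"
  by (auto simp: ltr_def)

lemma ev_simps: "ev G [] = \<one>" "ev G (l # w) = ltr G l \<otimes> ev G w"
  by (simp_all add: ev_def)

lemma ev_carrier: "ev G w \<in> carrier G"
  by (induction w) (auto simp: ev_simps ltr_carrier)

lemma ev_append: "ev G (u @ v) = ev G u \<otimes> ev G v"
  by (induction u) (auto simp: ev_simps ev_carrier ltr_carrier m_assoc)

lemma ev_cancel: "ev G [(x, b), (x, \<not> b)] = \<one>"
  by (auto simp: ev_simps ltr_def)

lemma ev_pres:
  assumes R: "\<forall>r\<in>R. ev G r = \<one>"
  shows "pres_eq R v w \<Longrightarrow> ev G v = ev G w"
proof (induction rule: pres_eq.induct)
  case (pres_cancel u x b v)
  then show ?case using ev_append[of "[(x, b), (x, \<not> b)]" v] ev_cancel[of x b] ev_carrier[of v]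
    by (simp add: ev_append)
next
  case (pres_rel r u v)
  then show ?case using R by (simp add: ev_append ev_carrier)
qed auto

lemma ev_single: "x \<in> carrier G \<Longrightarrow> ev G [(x, True)] = x"
  by (simp add: ev_simps ltr_def)

end




context QS
begin

abbreviation "B \<equiv> GammaS_bar S"
abbreviation "A \<equiv> Egens S"
abbreviation "R \<equiv> E_relators S"

definition cls :: "quat \<Rightarrow> quat set" where "cls x = Z #>\<^bsub>G\<^esub> x"

definition isE :: "quat \<Rightarrow> bool" where "isE x \<longleftrightarrow> x \<in> hurwitz \<and> hn x dvd M"
definition isU :: "quat \<Rightarrow> bool" where "isU x \<longleftrightarrow> x \<in> hurwitz \<and> (\<exists>N. hn x dvd M ^ N)"

lemma isE_isU: "isE x \<Longrightarrow> isU x"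
  unfolding isE_def isU_def by (metis power_one_right)

lemma isU_mult: "isU x \<Longrightarrow> isU y \<Longrightarrow> isU (x * y)"
proof -
  assume "isU x" "isU y"
  then obtain N K where "x \<in> hurwitz" "y \<in> hurwitz" "hn x dvd M ^ N" "hn y dvd M ^ K" unfolding isU_def by blast
  then show ?thesis unfolding isU_def
    by (auto simp: hn_mult hurwitz_mult power_add intro!: exI[of _ "N + K"] mult_dvd_mono)
qed

lemma isU_GammaS: assumes "isU x" shows "x \<in> GammaS S"
proof -
  obtain N where x: "x \<in> hurwitz" "hn x dvd M ^ N" using assms unfolding isU_def by blast
  then obtain t where t: "M ^ N = hn x * t" by blast
  have n0: "hn x \<noteq> 0"
  proof
    assume "hn x = 0" then have "M ^ N = 0" using t by simp
    then show False using M_pos by simp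
  qed
  define r where "r = sc (1 / of_nat (m ^ N)) * (sc (of_int t) * cnj x)"
  have mN: "(of_nat (m ^ N) :: rat) = of_int (hn x) * of_int t"
  proof -
    have "(of_nat (m ^ N) :: rat) = of_int (M ^ N)" by simp
    also have "\<dots> = of_int (hn x) * of_int t" using t by simp
    finally show ?thesis .
  qed
  have t0: "t \<noteq> 0" using mN m_pos by auto
  have r: "r = sc (1 / of_int (hn x)) * cnj x"
    unfolding r_def mN using t0 by (simp add: mult.assoc[symmetric] sc_mult)
  have "r \<in> OS S" unfolding r_def using x by (intro OS_sc hurwitz_scmult hurwitz_cnj)
  moreover have "x * r = 1"
  proof -
    have "x * r = sc (1 / of_int (hn x)) * (x * cnj x)" unfolding r by (simp add: sc_mid2)
    also have "\<dots> = 1" using x n0 by (simp add: mult_cnj_hn sc_mult)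
    finally show ?thesis .
  qed
  moreover have "r * x = 1"
  proof -
    have "r * x = sc (1 / of_int (hn x)) * (cnj x * x)" unfolding r by (simp add: mult.assoc)
    also have "\<dots> = 1" using x n0 by (simp add: cnj_mult_hn sc_mult)
    finally show ?thesis .
  qed
  ultimately show ?thesis unfolding GammaS_iff using OS_hurwitz[OF x(1)] by blast
qed

lemma normal_Z': "normal Z G" using normal_Z .

lemma B_simps: "carrier B = (\<lambda>x. Z #>\<^bsub>G\<^esub> x) ` GammaS S" "one B = Z" "monoid.mult B = set_mult G"
  unfolding GammaS_bar_def by (simp_all add: carrier_FactGroup)

lemma cls_carrier: "x \<in> GammaS S \<Longrightarrow> cls x \<in> carrier B"
  by (simp add: B_simps cls_def)

lemma cls_mult: "x \<in> GammaS S \<Longrightarrow> y \<in> GammaS S \<Longrightarrow> cls x \<otimes>\<^bsub>B\<^esub> cls y = cls (x * y)"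
  using normal.rcos_sum[OF normal_Z, of x y] by (simp add: B_simps cls_def)

lemma cls_1: "cls 1 = one B"
  using group.coset_mult_one[OF group_G, of Z] subgroup.subset[OF subgroup_Z] by (simp add: B_simps cls_def)

lemma cls_sc: assumes "x \<in> GammaS S" "c \<in> ZS_units S" shows "cls (sc c * x) = cls x"
proof -
  have "sc c * x \<in> Z #>\<^bsub>G\<^esub> x" unfolding r_coset_def using assms by (auto simp: Z_iff)
  then show ?thesis unfolding cls_def
    using group.repr_independence[OF group_G _ _ subgroup_Z] assms(1) by simp
qed

lemma cls_eq_one: "x \<in> GammaS S \<Longrightarrow> cls x = one B \<Longrightarrow> x \<in> Z"
  using group.rcos_self[OF group_G _ subgroup_Z, of x] by (simp add: B_simps cls_def)

lemma Egens_iff: "e \<in> A \<longleftrightarrow> (\<exists>x. isE x \<and> e = cls x)"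
proof
  assume "e \<in> A"
  then obtain x n where x: "e = cls x" "x \<in> hurwitz" "qnorm x = of_int n" "n dvd M"
    unfolding Egens_def cls_def by blast
  have "of_int (hn x) = (of_int n :: rat)" using x(2,3) hn_qnorm by simp
  then have "hn x = n" by simp
  then show "\<exists>x. isE x \<and> e = cls x" unfolding isE_def using x by blast
next
  assume "\<exists>x. isE x \<and> e = cls x"
  then obtain x where "isE x" "e = cls x" by blast
  then have "x \<in> hurwitz" "qnorm x = of_int (hn x)" "hn x dvd M" using hn_qnorm unfolding isE_def by auto
  then show "e \<in> A" unfolding Egens_def using \<open>e = cls x\<close> unfolding cls_def by blast
qed

lemma isE_cls: "isE x \<Longrightarrow> cls x \<in> A" by (subst Egens_iff) blast

lemma isE_GammaS: "isE x \<Longrightarrow> x \<in> GammaS S" by (rule isU_GammaS[OF isE_isU])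

lemma A_carrier: "e \<in> A \<Longrightarrow> e \<in> carrier B"
proof -
  assume "e \<in> A"
  then obtain x where "isE x" "e = cls x" by (subst (asm) Egens_iff) blast
  then show ?thesis using cls_carrier isE_GammaS by simp
qed

lemma cls_sc_int: assumes "x \<in> GammaS S" "n dvd M ^ N" shows "cls (sc (of_int n) * x) = cls x"
  using cls_sc[OF assms(1) zsu_int(1)[OF assms(2)]] .

lemma cls_div: assumes "isU x" "n dvd M ^ N" "x = sc (of_int n) * w" "w \<in> hurwitz"
  shows "isU w" "cls x = cls w"
proof -
  obtain K where K: "hn x dvd M ^ K" using assms unfolding isU_def by blast
  have "hn x = n^2 * hn w" using assms(3,4) hn_mult hn_sc_int hurwitz_sc_int by metis
  then have "hn w dvd M ^ K" using K dvd_mult_right by (metis mult.commute)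
  then show "isU w" using assms(4) unfolding isU_def by blast
  then show "cls x = cls w" using cls_sc_int[OF isU_GammaS assms(2)] assms(3) by simp
qed

lemma cls_cnj: assumes "isE x" shows "cls x \<otimes>\<^bsub>B\<^esub> cls (cnj x) = one B" "isE (cnj x)"
proof -
  have x: "x \<in> hurwitz" "hn x dvd M ^ 1" using assms unfolding isE_def by auto
  show "isE (cnj x)" using assms unfolding isE_def by (simp add: hn_cnj hurwitz_cnj)
  then have "cnj x \<in> GammaS S" using isU_GammaS isE_isU by blast
  moreover have "x \<in> GammaS S" using isU_GammaS isE_isU assms by blast
  ultimately have "cls x \<otimes>\<^bsub>B\<^esub> cls (cnj x) = cls (x * cnj x)" by (simp add: cls_mult)
  also have "\<dots> = cls (sc (of_int (hn x)) * 1)" using x by (simp add: mult_cnj_hn)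
  also have "\<dots> = cls 1" using cls_sc_int[OF GammaS_1 x(2)] .
  finally show "cls x \<otimes>\<^bsub>B\<^esub> cls (cnj x) = one B" by (simp add: cls_1)
qed

lemma ev_R: "r \<in> R \<Longrightarrow> ev B r = one B"
proof -
  assume "r \<in> R"
  then obtain s t n where r: "r = [(s, True), (t, True), (n, False)]" "s \<in> A" "t \<in> A" "n \<in> A"
    "s \<otimes>\<^bsub>B\<^esub> t = n" unfolding E_relators_def by blast
  have c: "s \<in> carrier B" "t \<in> carrier B" "n \<in> carrier B" using r A_carrier by auto
  interpret Bg: group B by (rule group_B)
  have "ev B r = s \<otimes>\<^bsub>B\<^esub> (t \<otimes>\<^bsub>B\<^esub> (inv\<^bsub>B\<^esub> n \<otimes>\<^bsub>B\<^esub> \<one>\<^bsub>B\<^esub>))"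
    using r(1) c by (simp add: Bg.ev_simps ltr_def)
  also have "\<dots> = (s \<otimes>\<^bsub>B\<^esub> t) \<otimes>\<^bsub>B\<^esub> inv\<^bsub>B\<^esub> n" using c by (simp add: Bg.m_assoc)
  also have "\<dots> = \<one>\<^bsub>B\<^esub>" using r(5) c by simp
  finally show ?thesis .
qed

end



context QS
begin

abbreviation "PS \<equiv> int ` S"

lemma PS_prime: "p \<in> PS \<Longrightarrow> Factorial_Ring.prime p"
  using primeS by auto

lemma PS_gt1: "p \<in> PS \<Longrightarrow> p > 1"
  using PS_prime prime_gt_1_int by blast

lemma M_prod: "M = (\<Prod>q\<in>S. int q)"
  by (simp add: mS_def)

lemma PS_dvd_M: "p \<in> PS \<Longrightarrow> p dvd M"
  unfolding M_prod using finS by auto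

lemma M_split: "q \<in> S \<Longrightarrow> M = int q * (\<Prod>r\<in>S - {q}. int r)"
  unfolding M_prod using finS by (simp add: prod.remove)

lemma PS_not_dvd_rest: assumes "q \<in> S" "p \<in> PS" "p dvd (\<Prod>r\<in>S - {q}. int r)" shows "p \<noteq> int q"
proof
  assume pq: "p = int q"
  from assms(3) obtain r where r: "r \<in> S - {q}" "p dvd int r"
    using prime_dvd_prod_iff[of "S - {q}" p] finS PS_prime[OF assms(2)] by auto
  have "p = int r" using primes_dvd_imp_eq[OF PS_prime[OF assms(2)] _ r(2)] r(1) primeS by auto
  then show False using pq r(1) by auto
qed

lemma PS_sq_not_dvd: assumes "p \<in> PS" shows "\<not> p^2 dvd M"
proof
  assume d: "p^2 dvd M"
  obtain q where q: "q \<in> S" "p = int q" using assms by blast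
  have "p * p dvd p * (\<Prod>r\<in>S - {q}. int r)" using d M_split[OF q(1)] q(2) by (simp add: power2_eq_square)
  then have "p dvd (\<Prod>r\<in>S - {q}. int r)" using PS_gt1[OF assms] by simp
  then show False using PS_not_dvd_rest[OF q(1) assms] q(2) by simp
qed

lemma PS_two_dvd: assumes "p \<in> PS" "q \<in> PS" "p \<noteq> q" shows "p * q dvd M"
proof -
  obtain p' q' where pq: "p' \<in> S" "q' \<in> S" "p = int p'" "q = int q'" using assms by blast
  have "M = int p' * (\<Prod>r\<in>S - {p'}. int r)" by (rule M_split[OF pq(1)])
  also have "(\<Prod>r\<in>S - {p'}. int r) = int q' * (\<Prod>r\<in>S - {p'} - {q'}. int r)"
    using finS pq assms(3) by (subst prod.remove[of _ q']) auto
  finally show ?thesis using pq by (simp add: mult.assoc)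
qed

lemma prime_dvd_M_pow: assumes "Factorial_Ring.prime r" "r dvd M ^ N" shows "r \<in> PS"
proof -
  have "r dvd M" using prime_dvd_power[OF assms] .
  then obtain q where q: "q \<in> S" "r dvd int q"
    using prime_dvd_prod_iff[of S r] finS assms(1) unfolding M_prod by auto
  have "r = int q" using primes_dvd_imp_eq[OF assms(1) _ q(2)] q(1) primeS by auto
  then show ?thesis using q(1) by blast
qed

lemma isE_not_pdv: assumes "isE x" "p \<in> PS" shows "\<not> pdv p x"
proof
  assume "pdv p x"
  then have "p^2 dvd hn x" by (rule pdv_hn)
  then have "p^2 dvd M" using assms(1) unfolding isE_def by (metis dvd_trans)
  then show False using PS_sq_not_dvd[OF assms(2)] by simp
qed

definition isP :: "quat \<Rightarrow> bool" where "isP x \<longleftrightarrow> x \<in> hurwitz \<and> hn x \<in> PS"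

lemma isP_isE: "isP x \<Longrightarrow> isE x"
  unfolding isP_def isE_def using PS_dvd_M by blast

lemma unit_isE: "x \<in> hurwitz \<Longrightarrow> hn x = 1 \<Longrightarrow> isE x"
  unfolding isE_def by simp

definition wrd :: "quat list \<Rightarrow> (quat set \<times> bool) list" where
  "wrd xs = map (\<lambda>x. (cls x, True)) xs"

lemma wrd_simps[simp]: "wrd [] = []" "wrd (x # xs) = (cls x, True) # wrd xs" "wrd (xs @ ys) = wrd xs @ wrd ys"
  by (simp_all add: wrd_def)

lemma merge: assumes "isE x" "isE y" "isE (x * y)"
  shows "pres_eq R (wrd [x, y]) (wrd [x * y])"
proof -
  have "cls x \<otimes>\<^bsub>B\<^esub> cls y = cls (x * y)" using assms by (simp add: cls_mult isE_GammaS)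
  then have "[(cls x, True), (cls y, True), (cls (x * y), False)] \<in> R"
    unfolding E_relators_def using assms isE_cls by blast
  then show ?thesis using pres_rel3 by simp
qed

lemma merge_in: assumes "isE x" "isE y" "isE (x * y)"
  shows "pres_eq R (wrd (pre @ x # y # post)) (wrd (pre @ (x * y) # post))"
  using pres_cong[OF merge[OF assms], of "wrd pre" "wrd post"] by simp

lemma one_trivial: "pres_eq R (wrd [1]) []"
proof -
  have e: "isE 1" by (simp add: unit_isE)
  have "pres_eq R (wrd [1, 1] @ [(cls 1, False)]) (wrd [1 * 1] @ [(cls 1, False)])"
    by (rule pres_cong2[OF merge[OF e e]]) (simp add: e)
  then have 1: "pres_eq R ([(cls 1, True), (cls 1, True), (cls 1, False)]) [(cls 1, True), (cls 1, False)]" by simp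
  have 2: "pres_eq R ([] @ [(cls 1, True), (cls 1, \<not> True)] @ []) ([] @ [])" by (rule pres_eq.pres_cancel)
  have 3: "pres_eq R ([(cls 1, True)] @ [(cls 1, True), (cls 1, \<not> True)] @ []) ([(cls 1, True)] @ [])"
    by (rule pres_eq.pres_cancel)
  from 1 2 3 show ?thesis by simp (meson pres_eq.pres_sym pres_eq.pres_trans)
qed

end



context QS
begin

lemma merge': assumes "isE x" "isE y" "isE z" "cls (x * y) = cls z"
  shows "pres_eq R (wrd [x, y]) (wrd [z])"
proof -
  have "cls x \<otimes>\<^bsub>B\<^esub> cls y = cls z" using assms by (simp add: cls_mult isE_GammaS)
  then have "[(cls x, True), (cls y, True), (cls z, False)] \<in> R"
    unfolding E_relators_def using assms isE_cls by blast
  then show ?thesis using pres_rel3 by simp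
qed

definition NFu :: "quat list \<Rightarrow> bool" where
  "NFu zs \<longleftrightarrow> (\<exists>u. zs = [u] \<and> u \<in> hurwitz \<and> hn u = 1)"

definition cond :: "quat \<Rightarrow> quat \<Rightarrow> bool" where
  "cond x y \<longleftrightarrow> (hn x = hn y \<longrightarrow> \<not> pdv (hn x) (x * y))"

definition NFp :: "quat list \<Rightarrow> bool" where
  "NFp zs \<longleftrightarrow> zs \<noteq> [] \<and> (\<forall>z\<in>set zs. isP z) \<and> sorted (map hn zs) \<and> successively cond zs"

definition NF :: "quat list \<Rightarrow> bool" where "NF zs \<longleftrightarrow> NFu zs \<or> NFp zs"

definition lb :: "int \<Rightarrow> quat list \<Rightarrow> bool" where "lb b zs \<longleftrightarrow> (\<forall>z\<in>set zs. hn z = 1 \<or> b \<le> hn z)"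

lemma isP_hn: "isP x \<Longrightarrow> hn x \<noteq> 1 \<and> hn x > 1 \<and> x \<in> hurwitz"
  unfolding isP_def using PS_gt1 by fastforce

lemma NFp_tail: "NFp (y # rest) \<Longrightarrow> rest \<noteq> [] \<Longrightarrow> NFp rest"
  unfolding NFp_def by (auto simp: successively_Cons)

lemma NFp_head_le: "NFp (y # rest) \<Longrightarrow> z \<in> set rest \<Longrightarrow> hn y \<le> hn z"
  unfolding NFp_def by auto

lemma NFu_lb: "NFu zs \<Longrightarrow> lb b zs"
  unfolding NFu_def lb_def by auto

lemma insU:
  assumes ys: "NF ys" and u: "u \<in> hurwitz" "hn u = 1"
  shows "\<exists>zs. NF zs \<and> pres_eq R (wrd (u # ys)) (wrd zs) \<and> (\<forall>b. lb b ys \<longrightarrow> lb b zs)"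
proof (cases "NFu ys")
  case True
  then obtain v where v: "ys = [v]" "v \<in> hurwitz" "hn v = 1" unfolding NFu_def by blast
  have uv: "u * v \<in> hurwitz" "hn (u * v) = 1" using u v by (simp_all add: hurwitz_mult hn_mult)
  have "NF [u * v]" unfolding NF_def NFu_def using uv by blast
  moreover have "pres_eq R (wrd (u # ys)) (wrd [u * v])"
    using merge[OF unit_isE[OF u] unit_isE[OF v(2,3)] unit_isE[OF uv]] v(1) by simp
  moreover have "lb b [u * v]" for b unfolding lb_def using uv by simp
  ultimately show ?thesis by blast
next
  case False
  then have p: "NFp ys" using ys unfolding NF_def by simp
  then obtain y rest where yr: "ys = y # rest" unfolding NFp_def by (cases ys) auto
  have yP: "isP y" using p yr unfolding NFp_def by simp
  have uy: "u * y \<in> hurwitz" "hn (u * y) = hn y" using u yP unfolding isP_def by (simp_all add: hurwitz_mult hn_mult)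
  then have uyP: "isP (u * y)" using yP unfolding isP_def by simp
  have pres: "pres_eq R (wrd (u # ys)) (wrd ((u * y) # rest))"
    using merge_in[OF unit_isE[OF u] isP_isE[OF yP] isP_isE[OF uyP], of "[]" rest] yr by simp
  have "NFp ((u * y) # rest)"
  proof -
    have "\<forall>z\<in>set ((u * y) # rest). isP z" using p yr uyP unfolding NFp_def by simp
    moreover have "map hn ((u * y) # rest) = map hn ys" using yr uy by simp
    moreover have "successively cond ((u * y) # rest)"
    proof (cases rest)
      case Nil then show ?thesis by simp
    next
      case (Cons y2 r)
      have s: "cond y y2" "successively cond (y2 # r)" using p yr Cons unfolding NFp_def by simp_all
      have y2: "isP y2" using p yr Cons unfolding NFp_def by simp
      have "cond (u * y) y2"
        unfolding cond_def
      proof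
        assume "hn (u * y) = hn y2"
        then have "\<not> pdv (hn y) (y * y2)" using s(1) uy unfolding cond_def by simp
        then show "\<not> pdv (hn (u * y)) (u * y * y2)" using pdv_unit_left[OF u] uy by (metis mult.assoc)
      qed
      then show ?thesis using s Cons by simp
    qed
    ultimately show ?thesis using p unfolding NFp_def by simp
  qed
  moreover have "lb b ys \<Longrightarrow> lb b ((u * y) # rest)" for b using yr uy unfolding lb_def by simp
  ultimately show ?thesis using pres unfolding NF_def by blast
qed

lemma insP:
  assumes x: "isP x" and ys: "NF ys" and l: "lb (hn x) ys"
  shows "\<exists>zs. NF zs \<and> pres_eq R (wrd (x # ys)) (wrd zs) \<and> (\<forall>b. b \<le> hn x \<longrightarrow> lb b ys \<longrightarrow> lb b zs)"
proof (cases "NFu ys")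
  case True
  then obtain v where v: "ys = [v]" "v \<in> hurwitz" "hn v = 1" unfolding NFu_def by blast
  have xv: "x * v \<in> hurwitz" "hn (x * v) = hn x" using x v unfolding isP_def by (simp_all add: hurwitz_mult hn_mult)
  then have xvP: "isP (x * v)" using x unfolding isP_def by simp
  have "NF [x * v]" unfolding NF_def NFp_def using xvP by simp
  moreover have "pres_eq R (wrd (x # ys)) (wrd [x * v])"
    using merge[OF isP_isE[OF x] unit_isE[OF v(2,3)] isP_isE[OF xvP]] v(1) by simp
  moreover have "b \<le> hn x \<Longrightarrow> lb b [x * v]" for b unfolding lb_def using xv by simp
  ultimately show ?thesis by blast
next
  case False
  then have p: "NFp ys" using ys unfolding NF_def by simp
  then obtain y rest where yr: "ys = y # rest" unfolding NFp_def by (cases ys) auto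
  have yP: "isP y" using p yr unfolding NFp_def by simp
  have allP: "\<forall>z\<in>set ys. isP z" using p unfolding NFp_def by simp
  have xle: "\<forall>z\<in>set ys. hn x \<le> hn z" using l allP isP_hn unfolding lb_def by fastforce
  show ?thesis
  proof (cases "hn x = hn y \<and> pdv (hn x) (x * y)")
    case True
    then obtain w where w: "w \<in> hurwitz" "x * y = sc (of_int (hn x)) * w" unfolding pdv_def by blast
    have xE: "isE x" "isE y" using x yP isP_isE by auto
    have p0: "hn x \<noteq> 0" using isP_hn[OF x] by simp
    have "hn x * hn x * hn w = hn x * hn x * 1"
    proof -
      have "hn (x * y) = hn x * hn x" using True xE hn_mult unfolding isE_def by simp
      moreover have "hn (x * y) = hn x ^ 2 * hn w" using w hn_mult[OF hurwitz_sc_int w(1)] hn_sc_int by simp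
      ultimately show ?thesis by (simp add: power2_eq_square)
    qed
    then have hw: "hn w = 1" using p0 by simp
    have wE: "isE w" using unit_isE[OF w(1) hw] .
    have "cls (x * y) = cls w"
      using cls_div(2)[OF isU_mult[OF isE_isU[OF xE(1)] isE_isU[OF xE(2)]] _ w(2) w(1), of 1]
        PS_dvd_M x unfolding isP_def by simp
    then have "pres_eq R (wrd [x, y] @ wrd rest) (wrd [w] @ wrd rest)"
      by (intro pres_cong2 merge'[OF xE wE])
    then have pres: "pres_eq R (wrd (x # ys)) (wrd (w # rest))" using yr by simp
    show ?thesis
    proof (cases "rest = []")
      case True
      have "NF [w]" unfolding NF_def NFu_def using w(1) hw by blast
      moreover have "lb b [w]" for b unfolding lb_def using hw by simp
      ultimately show ?thesis using pres True by blast
    next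
      case False
      then have "NF rest" using NFp_tail p yr unfolding NF_def by blast
      then obtain zs where zs: "NF zs" "pres_eq R (wrd (w # rest)) (wrd zs)" "\<forall>b. lb b rest \<longrightarrow> lb b zs"
        using insU[OF _ w(1) hw] by blast
      have "lb b ys \<Longrightarrow> lb b rest" for b using yr unfolding lb_def by simp
      then show ?thesis using zs pres by (blast intro: pres_eq.pres_trans)
    qed
  next
    case False
    have "NFp (x # ys)"
    proof -
      have "\<forall>z\<in>set (x # ys). isP z" using allP x by simp
      moreover have "sorted (map hn (x # ys))" using p xle unfolding NFp_def by simp
      moreover have "successively cond (x # ys)" using p yr False unfolding NFp_def cond_def by simp
      ultimately show ?thesis unfolding NFp_def by simp
    qed
    moreover have "b \<le> hn x \<Longrightarrow> lb b ys \<Longrightarrow> lb b (x # ys)" for b unfolding lb_def by simp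
    ultimately show ?thesis unfolding NF_def by (blast intro: pres_eq.pres_refl)
  qed
qed

lemma insG:
  "isP x \<Longrightarrow> NF ys \<Longrightarrow> \<exists>zs. NF zs \<and> pres_eq R (wrd (x # ys)) (wrd zs) \<and> (\<forall>b. b \<le> hn x \<longrightarrow> lb b ys \<longrightarrow> lb b zs)"
proof (induction ys arbitrary: x)
  case Nil
  then show ?case unfolding NF_def NFu_def NFp_def by simp
next
  case (Cons y rest)
  note x = Cons.prems(1) and ys = Cons.prems(2)
  show ?case
  proof (cases "lb (hn x) (y # rest)")
    case True
    then show ?thesis using insP[OF x ys] by blast
  next
    case False
    then have nu: "\<not> NFu (y # rest)" using NFu_lb by blast
    then have p: "NFp (y # rest)" using ys unfolding NF_def by simp
    have yP: "isP y" using p unfolding NFp_def by simp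
    have allP: "\<forall>z\<in>set (y # rest). isP z" using p unfolding NFp_def by simp
    obtain z where z: "z \<in> set (y # rest)" "hn z \<noteq> 1" "hn z < hn x" using False unfolding lb_def by force
    have "hn y \<le> hn z" using z(1) NFp_head_le[OF p] by auto
    then have qp: "hn y < hn x" using z by simp
    define p' where "p' = hn x"
    define q' where "q' = hn y"
    have pPS: "p' \<in> PS" "q' \<in> PS" using x yP unfolding isP_def p'_def q'_def by auto
    have xE: "isE x" "isE y" using x yP isP_isE by auto
    have xyH: "x * y \<in> hurwitz" using xE unfolding isE_def by (simp add: hurwitz_mult)
    have hxy: "hn (x * y) = p' * q'" using xE hn_mult unfolding isE_def p'_def q'_def by simp
    have xyE: "isE (x * y)" unfolding isE_def using xyH hxy PS_two_dvd[OF pPS] qp p'_def q'_def by simp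
    have npdv: "\<not> pdv p' (x * y)" using isE_not_pdv[OF xyE pPS(1)] .
    obtain y' x' where yx: "y' \<in> hurwitz" "x' \<in> hurwitz" "hn x' = p'" "x * y = y' * x'"
      using right_divisor_exists[OF PS_prime[OF pPS(1)] xyH npdv] hxy by auto
    have "hn y' * p' = q' * p'" using hn_mult[OF yx(1,2)] yx(3,4) hxy by (simp add: mult.commute)
    then have hy': "hn y' = q'" using PS_gt1[OF pPS(1)] by simp
    have x'P: "isP x'" "isP y'" unfolding isP_def using yx hy' pPS by auto
    have pres1: "pres_eq R (wrd (x # y # rest)) (wrd (y' # x' # rest))"
    proof -
      have "pres_eq R (wrd ([] @ x # y # rest)) (wrd ([] @ (x * y) # rest))"
        by (rule merge_in[OF xE xyE])
      moreover have "pres_eq R (wrd ([] @ y' # x' # rest)) (wrd ([] @ (y' * x') # rest))"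
        using merge_in[OF isP_isE[OF x'P(2)] isP_isE[OF x'P(1)], of "[]" rest] xyE yx(4) by simp
      ultimately show ?thesis using yx(4) by simp (meson pres_eq.pres_sym pres_eq.pres_trans)
    qed
    have lbq: "lb b (y # rest) \<Longrightarrow> b \<le> q'" for b using isP_hn[OF yP] unfolding lb_def q'_def by auto
    show ?thesis
    proof (cases "rest = []")
      case True
      have "NFp [y', x']" unfolding NFp_def cond_def using x'P qp yx(3) hy' p'_def q'_def by simp
      moreover have "b \<le> hn x \<Longrightarrow> lb b (y # rest) \<Longrightarrow> lb b [y', x']" for b
        using lbq qp yx(3) hy' unfolding lb_def p'_def q'_def by auto
      ultimately show ?thesis using pres1 True unfolding NF_def by blast
    next
      case False
      then have "NF rest" using NFp_tail[OF p] unfolding NF_def by blast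
      then obtain zs1 where zs1: "NF zs1" "pres_eq R (wrd (x' # rest)) (wrd zs1)"
         "\<forall>b. b \<le> hn x' \<longrightarrow> lb b rest \<longrightarrow> lb b zs1"
        using Cons.IH[OF x'P(1)] by blast
      have "lb q' rest" using NFp_head_le[OF p] unfolding lb_def q'_def by auto
      then have "lb (hn y') zs1" using zs1(3) hy' yx(3) qp p'_def q'_def by simp
      then obtain zs where zs: "NF zs" "pres_eq R (wrd (y' # zs1)) (wrd zs)"
         "\<forall>b. b \<le> hn y' \<longrightarrow> lb b zs1 \<longrightarrow> lb b zs"
        using insP[OF x'P(2) zs1(1)] by blast
      have "pres_eq R (wrd (x # y # rest)) (wrd zs)"
      proof -
        have "pres_eq R (wrd (y' # x' # rest)) (wrd (y' # zs1))" using pres_cons[OF zs1(2)] by simp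
        then show ?thesis using pres1 zs(2) by (meson pres_eq.pres_trans)
      qed
      moreover have "b \<le> hn x \<Longrightarrow> lb b (y # rest) \<Longrightarrow> lb b zs" for b
      proof -
        assume b: "b \<le> hn x" "lb b (y # rest)"
        have "b \<le> q'" using lbq[OF b(2)] .
        moreover have "lb b rest" using b(2) unfolding lb_def by simp
        ultimately have "lb b zs1" using zs1(3) b(1) yx(3) p'_def by simp
        then show "lb b zs" using zs(3) \<open>b \<le> q'\<close> hy' by simp
      qed
      ultimately show ?thesis using zs(1) by blast
    qed
  qed
qed

lemma insE:
  "isE x \<Longrightarrow> NF ys \<Longrightarrow> \<exists>zs. NF zs \<and> pres_eq R (wrd (x # ys)) (wrd zs)"
proof (induction "nat (hn x)" arbitrary: x ys rule: less_induct)
  case less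
  note x = less.prems(1) and ys = less.prems(2)
  have xH: "x \<in> hurwitz" "hn x dvd M" using x unfolding isE_def by auto
  show ?case
  proof (cases "hn x = 1")
    case True
    then show ?thesis using insU[OF ys xH(1)] by blast
  next
    case False
    have n0: "hn x \<noteq> 0" using xH(2) M_pos by auto
    then obtain r where r: "r dvd hn x" "Factorial_Ring.prime r"
      using prime_divisor_exists[of "hn x"] False hn_nonneg[of x] by auto
    have rPS: "r \<in> PS" using prime_dvd_M_pow[OF r(2), of 1] r(1) xH(2) by (metis dvd_trans power_one_right)
    have npdv: "\<not> pdv r x" using isE_not_pdv[OF x rPS] .
    obtain a y where ay: "a \<in> hurwitz" "y \<in> hurwitz" "hn y = r" "x = a * y"
      using right_divisor_exists[OF r(2) xH(1) npdv r(1)] by blast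
    have hx: "hn x = hn a * r" using hn_mult[OF ay(1,2)] ay(3,4) by simp
    have yP: "isP y" unfolding isP_def using ay rPS by simp
    have aE: "isE a" unfolding isE_def using ay(1) xH(2) hx by (metis dvd_mult_left)
    have lt: "nat (hn a) < nat (hn x)" using hx PS_gt1[OF rPS] n0 hn_nonneg[of a]
      by (simp add: nat_less_eq_zless)
    obtain zs1 where zs1: "NF zs1" "pres_eq R (wrd (y # ys)) (wrd zs1)" using insG[OF yP ys] by blast
    obtain zs where zs: "NF zs" "pres_eq R (wrd (a # zs1)) (wrd zs)" using less.hyps[OF lt aE zs1(1)] by blast
    have "pres_eq R (wrd ([] @ a # y # ys)) (wrd ([] @ (a * y) # ys))"
      by (rule merge_in[OF aE isP_isE[OF yP]]) (use x ay(4) in simp)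
    then have "pres_eq R (wrd (x # ys)) (wrd (a # y # ys))" using ay(4) by (simp add: pres_eq.pres_sym)
    moreover have "pres_eq R (wrd (a # y # ys)) (wrd (a # zs1))" using pres_cons[OF zs1(2)] by simp
    ultimately show ?thesis using zs by (meson pres_eq.pres_trans)
  qed
qed

lemma toNF: "(\<forall>x\<in>set xs. isE x) \<Longrightarrow> \<exists>zs. NF zs \<and> pres_eq R (wrd xs) (wrd zs)"
proof (induction xs)
  case Nil
  have "NF [1]" unfolding NF_def NFu_def by simp
  then show ?case using one_trivial pres_eq.pres_sym by fastforce
next
  case (Cons x xs)
  then obtain zs1 where zs1: "NF zs1" "pres_eq R (wrd xs) (wrd zs1)" by auto
  obtain zs where zs: "NF zs" "pres_eq R (wrd (x # zs1)) (wrd zs)" using insE Cons.prems zs1(1) by force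
  have "pres_eq R (wrd (x # xs)) (wrd (x # zs1))" using pres_cons[OF zs1(2)] by simp
  then show ?case using zs by (meson pres_eq.pres_trans)
qed

end



lemma sc_hurwitz_int: "sc c \<in> hurwitz \<Longrightarrow> \<exists>n. c = of_int n"
proof -
  assume "sc c \<in> hurwitz"
  then obtain n1 n2 n3 n4 where e: "sc c = hq n1 n2 n3 n4" by (auto simp: hurwitz_iff)
  then have "qk (sc c) = qk (hq n1 n2 n3 n4)" "re (sc c) = re (hq n1 n2 n3 n4)" by simp_all
  then have "n4 = 0" "c = of_int n1 + of_int n4 / 2" by (simp_all add: hq_def)
  then show ?thesis by auto
qed

lemma hn_prod: "(\<forall>x\<in>set xs. x \<in> hurwitz) \<Longrightarrow> prod_list xs \<in> hurwitz \<and> hn (prod_list xs) = prod_list (map hn xs)"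
  by (induction xs) (auto simp: hurwitz_mult hn_mult)

context QS
begin

lemma coprime_prod: "(\<forall>z\<in>set rs. hn z \<in> PS \<and> hn z \<noteq> p) \<Longrightarrow> p \<in> PS \<Longrightarrow> coprime (prod_list (map hn rs)) p"
proof (induction rs)
  case Nil then show ?case by simp
next
  case (Cons z rs)
  have "coprime (hn z) p" using Cons.prems PS_prime by (intro primes_coprime) auto
  then show ?case using Cons by simp
qed

lemma NFp_nontriv: assumes "NFp zs" "prod_list zs = sc c" shows False
proof -
  obtain z0 zt where zs: "zs = z0 # zt" using assms(1) unfolding NFp_def by (cases zs) auto
  define p where "p = hn z0"
  have allP: "\<forall>z\<in>set zs. isP z" using assms(1) unfolding NFp_def by simp
  have pPS: "p \<in> PS" using allP zs unfolding p_def isP_def by simp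
  have pprime: "Factorial_Ring.prime p" using PS_prime[OF pPS] .
  have srt: "sorted (map hn zs)" using assms(1) unfolding NFp_def by simp
  have ple: "\<forall>z\<in>set zs. p \<le> hn z" using srt zs unfolding p_def by auto
  define ws where "ws = takeWhile (\<lambda>z. hn z = p) zs"
  define rs where "rs = dropWhile (\<lambda>z. hn z = p) zs"
  have wr: "zs = ws @ rs" unfolding ws_def rs_def by simp
  have wsne: "ws \<noteq> []" unfolding ws_def zs p_def by simp
  have wsp: "\<forall>z\<in>set ws. hn z = p" unfolding ws_def by (auto dest: set_takeWhileD)
  have wsP: "\<forall>z\<in>set ws. z \<in> hurwitz \<and> hn z = p" using wsp allP wr unfolding isP_def by auto
  have "successively cond ws" using assms(1) wr unfolding NFp_def by (simp add: successively_append_iff)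
  then have "successively (\<lambda>x y. \<not> pdv p (x * y)) ws"
  proof (rule successively_mono)
    fix x y assume "x \<in> set ws" "y \<in> set ws" "cond x y"
    then show "\<not> pdv p (x * y)" using wsp unfolding cond_def by auto
  qed
  then have nws: "\<not> pdv p (prod_list ws)" using nonbacktrack[OF pprime wsne] wsP by blast
  have rsne: "\<forall>z\<in>set rs. hn z \<noteq> p"
  proof (cases "rs = []")
    case True then show ?thesis by simp
  next
    case False
    then obtain h t where ht: "rs = h # t" by (cases rs) auto
    have hne: "hn h \<noteq> p" using hd_dropWhile[of "\<lambda>z. hn z = p" zs] False ht unfolding rs_def by simp
    have "h \<in> set zs" using wr ht by simp
    then have "p < hn h" using ple hne by force
    moreover have "sorted (map hn rs)" using srt wr by (simp add: sorted_append)
    then have "\<forall>z\<in>set t. hn h \<le> hn z" using ht by simp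
    ultimately show ?thesis using ht by force
  qed
  have rsH: "\<forall>z\<in>set rs. z \<in> hurwitz \<and> hn z \<in> PS" using allP wr unfolding isP_def by auto
  have cop: "coprime (hn (prod_list rs)) p"
    using coprime_prod[of rs p] rsne rsH pPS hn_prod[of rs] by simp
  have zsH: "\<forall>z\<in>set zs. z \<in> hurwitz" using allP unfolding isP_def by simp
  have pzs: "prod_list zs \<in> hurwitz" using hn_prod[OF zsH] by simp
  then obtain n where n: "c = of_int n" using assms(2) sc_hurwitz_int by force
  have "hn (prod_list zs) = n^2" using assms(2) n hn_sc_int by simp
  moreover have "p dvd hn (prod_list zs)" using hn_prod[OF zsH] zs unfolding p_def by simp
  ultimately have "p dvd n * n" by (simp add: power2_eq_square)
  then have "p dvd n" using pprime by (simp add: prime_dvd_mult_iff)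
  then obtain k where k: "n = p * k" by blast
  have "prod_list ws * prod_list rs = sc (of_int p) * sc (of_int k)"
    using assms(2) wr n k by (simp add: sc_mult)
  then have "pdv p (prod_list ws * prod_list rs)" unfolding pdv_def using hurwitz_sc_int by blast
  then have "pdv p (prod_list ws)"
    using pdv_cancel_right[OF _ _ _ cop] hn_prod[of ws] hn_prod[of rs] wsP rsH by blast
  then show False using nws by simp
qed

lemma ev_wrd: "(\<forall>x\<in>set xs. isU x) \<Longrightarrow> ev B (wrd xs) = cls (prod_list xs) \<and> isU (prod_list xs)"
proof (induction xs)
  case Nil
  have "isU 1" unfolding isU_def by (auto intro!: exI[of _ 0])
  then show ?case using group.ev_simps(1)[OF group_B] cls_1 by simp
next
  case (Cons x xs)
  then have IH: "ev B (wrd xs) = cls (prod_list xs)" "isU (prod_list xs)" and x: "isU x" by auto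
  have "ev B (wrd (x # xs)) = cls x \<otimes>\<^bsub>B\<^esub> cls (prod_list xs)"
    using group.ev_simps(2)[OF group_B] IH cls_carrier[OF isU_GammaS[OF x]] by (simp add: ltr_def)
  also have "\<dots> = cls (x * prod_list xs)" using cls_mult isU_GammaS x IH(2) by simp
  finally show ?case using isU_mult[OF x IH(2)] by simp
qed

lemma neg_letter: assumes "isE x" shows "pres_eq R [(cls x, False)] [(cls (cnj x), True)]"
proof -
  have c: "isE (cnj x)" using cls_cnj(2)[OF assms] .
  have "cls (x * cnj x) = cls 1"
    using cls_cnj(1)[OF assms] cls_mult[OF isE_GammaS[OF assms] isE_GammaS[OF c]] cls_1 by simp
  then have "pres_eq R (wrd [x, cnj x]) (wrd [1])" using merge'[OF assms c unit_isE] by simp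
  then have 1: "pres_eq R (wrd [x, cnj x]) []" using one_trivial pres_eq.pres_trans by blast
  have "pres_eq R ([(cls x, False)] @ wrd [x, cnj x]) ([(cls x, False)] @ [])" by (rule pres_cong1[OF 1])
  then have 2: "pres_eq R [(cls x, False)] [(cls x, False), (cls x, True), (cls (cnj x), True)]"
    by (simp add: pres_eq.pres_sym)
  have "pres_eq R ([] @ [(cls x, False), (cls x, \<not> False)] @ [(cls (cnj x), True)]) ([] @ [(cls (cnj x), True)])"
    by (rule pres_eq.pres_cancel)
  then show ?thesis using 2 by (simp add: pres_eq.pres_trans)
qed

lemma toE: "w \<in> lists (A \<times> UNIV) \<Longrightarrow> \<exists>xs. (\<forall>x\<in>set xs. isE x) \<and> pres_eq R w (wrd xs)"
proof (induction w)
  case Nil show ?case by (intro exI[of _ "[]"]) (simp add: pres_eq.pres_refl)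
next
  case (Cons l w)
  then obtain xs where xs: "\<forall>x\<in>set xs. isE x" "pres_eq R w (wrd xs)" by auto
  obtain e b where l: "l = (e, b)" by (cases l)
  have "e \<in> A" using Cons.prems l by auto
  then obtain x where x: "isE x" "e = cls x" using Egens_iff by blast
  have w1: "pres_eq R ([l] @ w) ([l] @ wrd xs)" by (rule pres_cong1[OF xs(2)])
  show ?case
  proof (cases b)
    case True
    then show ?thesis using w1 xs x l by (intro exI[of _ "x # xs"]) simp
  next
    case False
    have "pres_eq R ([(cls x, False)] @ wrd xs) ([(cls (cnj x), True)] @ wrd xs)"
      by (rule pres_cong2[OF neg_letter[OF x(1)]])
    then have "pres_eq R (l # w) (wrd (cnj x # xs))" using w1 l x False by (simp, meson pres_eq.pres_trans)
    then show ?thesis using xs cls_cnj(2)[OF x(1)] by (intro exI[of _ "cnj x # xs"]) simp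
  qed
qed

lemma ev_R_all: "\<forall>r\<in>R. ev B r = one B" using ev_R by blast

lemma core: assumes "w \<in> lists (A \<times> UNIV)" "ev B w = one B" shows "pres_eq R w []"
proof -
  obtain xs where xs: "\<forall>x\<in>set xs. isE x" "pres_eq R w (wrd xs)" using toE[OF assms(1)] by blast
  obtain zs where zs: "NF zs" "pres_eq R (wrd xs) (wrd zs)" using toNF[OF xs(1)] by blast
  have wz: "pres_eq R w (wrd zs)" using xs(2) zs(2) pres_eq.pres_trans by blast
  have "ev B (wrd zs) = one B" using group.ev_pres[OF group_B ev_R_all wz] assms(2) by simp
  have zsU: "\<forall>x\<in>set zs. isU x"
    using zs(1) unfolding NF_def NFu_def NFp_def isP_def isU_def
    by (auto intro!: exI[of _ 1] PS_dvd_M)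
  then have "cls (prod_list zs) = one B" "isU (prod_list zs)"
    using ev_wrd \<open>ev B (wrd zs) = one B\<close> by auto
  then have "prod_list zs \<in> Z" using cls_eq_one isU_GammaS by blast
  then obtain c where "prod_list zs = sc c" using Z_iff by blast
  then have "\<not> NFp zs" using NFp_nontriv by blast
  then obtain u where u: "zs = [u]" "u \<in> hurwitz" "hn u = 1" using zs(1) unfolding NF_def NFu_def by blast
  have "cls u = cls 1" using \<open>cls (prod_list zs) = one B\<close> u cls_1 by simp
  then have "wrd zs = wrd [1]" using u by simp
  then show ?thesis using wz one_trivial pres_eq.pres_trans by metis
qed

lemma injective: assumes "w1 \<in> lists (A \<times> UNIV)" "w2 \<in> lists (A \<times> UNIV)" "ev B w1 = ev B w2"
  shows "pres_eq R w1 w2"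
proof -
  interpret Bg: group B by (rule group_B)
  have "ev B (invw w2 @ w2) = ev B []" by (rule Bg.ev_pres[OF ev_R_all invw_cancel2])
  then have "ev B (invw w2) \<otimes>\<^bsub>B\<^esub> ev B w2 = \<one>\<^bsub>B\<^esub>" by (simp add: Bg.ev_append Bg.ev_simps)
  then have inv: "ev B (invw w2) = inv\<^bsub>B\<^esub> ev B w2" using Bg.inv_equality Bg.ev_carrier by blast
  have "ev B (w1 @ invw w2) = \<one>\<^bsub>B\<^esub>" using assms(3) inv by (simp add: Bg.ev_append Bg.ev_carrier)
  moreover have "invw w2 \<in> lists (A \<times> UNIV)" using invw_lists[OF assms(2)] .
  then have "w1 @ invw w2 \<in> lists (A \<times> UNIV)" using assms(1) by simp
  ultimately have 1: "pres_eq R (w1 @ invw w2) []" using core by simp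
  have "pres_eq R (w1 @ (invw w2 @ w2)) (w1 @ [])" by (rule pres_cong1[OF invw_cancel2])
  then have 2: "pres_eq R w1 ((w1 @ invw w2) @ w2)" by (simp add: pres_eq.pres_sym)
  have "pres_eq R ((w1 @ invw w2) @ w2) ([] @ w2)" by (rule pres_cong2[OF 1])
  then show ?thesis using 2 by (simp add: pres_eq.pres_trans)
qed

lemma factor: "isU x \<Longrightarrow> \<exists>xs. (\<forall>y\<in>set xs. isE y) \<and> ev B (wrd xs) = cls x"
proof (induction "nat (hn x)" arbitrary: x rule: less_induct)
  case less
  note x = less.prems
  obtain N where xH: "x \<in> hurwitz" "hn x dvd M ^ N" using x unfolding isU_def by blast
  have n0: "hn x \<noteq> 0" using xH(2) M_pos by auto
  show ?case
  proof (cases "hn x = 1")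
    case True
    then have "isE x" using unit_isE xH by simp
    moreover have "ev B (wrd [x]) = cls x" using ev_wrd[of "[x]"] x by simp
    ultimately show ?thesis by (intro exI[of _ "[x]"]) simp
  next
    case False
    then obtain r where r: "r dvd hn x" "Factorial_Ring.prime r"
      using prime_divisor_exists[of "hn x"] n0 hn_nonneg[of x] by auto
    have rPS: "r \<in> PS" using prime_dvd_M_pow[OF r(2)] r(1) xH(2) by (metis dvd_trans)
    have r1: "r > 1" using PS_gt1[OF rPS] .
    show ?thesis
    proof (cases "pdv r x")
      case True
      then obtain w where w: "w \<in> hurwitz" "x = sc (of_int r) * w" unfolding pdv_def by blast
      have cw: "isU w" "cls x = cls w" using cls_div[OF x _ w(2) w(1), of 1] PS_dvd_M[OF rPS] by auto
      have "hn x = r^2 * hn w" using w hn_mult[OF hurwitz_sc_int w(1)] hn_sc_int by simp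
      then have "hn w < hn x" using r1 n0 hn_nonneg[of w]
        by (simp add: power2_eq_square) (metis mult.assoc mult_less_cancel_right1 less_1_mult less_le mult_eq_0_iff)
      then have "nat (hn w) < nat (hn x)" using hn_nonneg[of w] by simp
      then show ?thesis using less.hyps cw by metis
    next
      case False
      obtain a y where ay: "a \<in> hurwitz" "y \<in> hurwitz" "hn y = r" "x = a * y"
        using right_divisor_exists[OF r(2) xH(1) False r(1)] by blast
      have hx: "hn x = hn a * r" using hn_mult[OF ay(1,2)] ay(3,4) by simp
      have yE: "isE y" using ay rPS PS_dvd_M unfolding isE_def by simp
      have aU: "isU a" unfolding isU_def using ay(1) xH(2) hx by (metis dvd_mult_left)
      have lt: "nat (hn a) < nat (hn x)" using hx r1 n0 hn_nonneg[of a] by (simp add: nat_less_eq_zless)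
      obtain xs where xs: "\<forall>y\<in>set xs. isE y" "ev B (wrd xs) = cls a" using less.hyps[OF lt aU] by blast
      have e1: "ev B (wrd (xs @ [y])) = ev B (wrd xs) \<otimes>\<^bsub>B\<^esub> ev B (wrd [y])"
        by (simp add: group.ev_append[OF group_B])
      have e2: "ev B (wrd [y]) = cls y" using ev_wrd[of "[y]"] isE_isU[OF yE] by simp
      have e3: "cls a \<otimes>\<^bsub>B\<^esub> cls y = cls x" using cls_mult isU_GammaS aU isE_isU yE ay(4) by simp
      have "ev B (wrd (xs @ [y])) = cls x" using e1 e2 e3 xs(2) by simp
      then show ?thesis using xs yE by (intro exI[of _ "xs @ [y]"]) auto
    qed
  qed
qed

lemma surjective: assumes "g \<in> carrier B" shows "\<exists>xs. (\<forall>y\<in>set xs. isE y) \<and> ev B (wrd xs) = g"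
proof -
  obtain q where q: "q \<in> GammaS S" "g = Z #>\<^bsub>G\<^esub> q" using assms by (auto simp: B_simps)
  obtain r where r: "q \<in> OS S" "r \<in> OS S" "q * r = 1" using q(1) unfolding GammaS_iff by blast
  obtain x k where xk: "x \<in> hurwitz" "q = sc (1 / of_nat (m ^ k)) * x" using r(1) OS_iff by blast
  obtain y j where yj: "y \<in> hurwitz" "r = sc (1 / of_nat (m ^ j)) * y" using r(2) OS_iff by blast
  define a where "a = sc (1 / of_nat (m ^ k))"
  define b where "b = sc (1 / of_nat (m ^ j))"
  define N :: rat where "N = of_nat (m ^ (k + j))"
  have N0: "N \<noteq> 0" unfolding N_def using m_pos by simp
  have "q * r = a * x * (b * y)" using xk(2) yj(2) unfolding a_def b_def by simp
  also have "\<dots> = a * (x * (b * y))" by (simp only: mult.assoc)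
  also have "\<dots> = a * (b * (x * y))" unfolding b_def by (simp only: sc_mid2)
  also have "\<dots> = (a * b) * (x * y)" by (simp only: mult.assoc)
  also have "a * b = sc (1 / N)" unfolding a_def b_def N_def by (simp add: sc_mult power_add)
  finally have e1: "sc (1 / N) * (x * y) = 1" using r(3) by simp
  have "x * y = (sc N * sc (1 / N)) * (x * y)" using N0 by (simp add: sc_mult)
  also have "\<dots> = sc N" using e1 by (simp only: mult.assoc) simp
  finally have xy: "x * y = sc (of_int (M ^ (k + j)))" unfolding N_def by simp
  have "hn (x * y) = (M ^ (k + j))^2" unfolding xy by (rule hn_sc_int)
  then have "hn x * hn y = (M ^ (k + j))^2" using hn_mult[OF xk(1) yj(1)] by simp
  also have "\<dots> = M ^ ((k + j) * 2)" by (simp only: power_mult)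
  finally have "hn x dvd M ^ ((k + j) * 2)" by (metis dvd_triv_left)
  then have xU: "isU x" unfolding isU_def using xk(1) by blast
  have "g = cls q" using q(2) cls_def by simp
  also have "\<dots> = cls x" using xk(2) cls_sc[OF isU_GammaS[OF xU] zsu_m] by simp
  finally show ?thesis using factor[OF xU] by simp
qed

end



lemma pres_class_mem: "v \<in> pres_class A R w \<longleftrightarrow> v \<in> lists (A \<times> UNIV) \<and> pres_eq R v w"
  by (simp add: pres_class_def)

lemma pres_class_eq: "pres_eq R w1 w2 \<Longrightarrow> pres_class A R w1 = pres_class A R w2"
  unfolding pres_class_def by (blast intro: pres_eq.pres_trans pres_eq.pres_sym)

lemma some_class: "w \<in> lists (A \<times> UNIV) \<Longrightarrow> (SOME v. v \<in> pres_class A R w) \<in> pres_class A R w"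
  by (rule someI[of _ w]) (simp add: pres_class_mem pres_eq.pres_refl)

theorem mainTheorem7:
  fixes S :: "nat set"
  assumes "finite S" and "\<forall>p\<in>S. Factorial_Ring.prime p \<and> odd p"
  shows "\<exists>\<phi>. \<phi> \<in> iso (presented_group (Egens S) (E_relators S)) (GammaS_bar S) \<and>
           (\<forall>e\<in>Egens S. \<phi> (pres_class (Egens S) (E_relators S) [(e, True)]) = e)"
proof -
  interpret QS S using assms by unfold_locales auto
  interpret Bg: group B by (rule group_B)
  define P where "P = presented_group A R"
  define \<phi> where "\<phi> = (\<lambda>C. ev B (SOME w. w \<in> C))"
  have carrP: "carrier P = pres_class A R ` lists (A \<times> UNIV)" unfolding P_def presented_group_def by simp
  have multP: "C \<otimes>\<^bsub>P\<^esub> D = pres_mult A R C D" for C D unfolding P_def presented_group_def by simp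
  have phi_cls: "\<phi> (pres_class A R w) = ev B w" if "w \<in> lists (A \<times> UNIV)" for w
  proof -
    have "(SOME v. v \<in> pres_class A R w) \<in> pres_class A R w" using some_class[OF that] .
    then have "pres_eq R (SOME v. v \<in> pres_class A R w) w" by (simp add: pres_class_mem)
    then show ?thesis unfolding \<phi>_def by (rule Bg.ev_pres[OF ev_R_all])
  qed
  have hom: "\<phi> \<in> hom P B"
  proof (rule homI)
    fix C assume "C \<in> carrier P"
    then obtain w where "w \<in> lists (A \<times> UNIV)" "C = pres_class A R w" using carrP by blast
    then show "\<phi> C \<in> carrier B" using phi_cls Bg.ev_carrier by simp
  next
    fix C D assume CD: "C \<in> carrier P" "D \<in> carrier P"
    obtain w1 where w1: "w1 \<in> lists (A \<times> UNIV)" "C = pres_class A R w1" using CD(1) carrP by blast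
    obtain w2 where w2: "w2 \<in> lists (A \<times> UNIV)" "D = pres_class A R w2" using CD(2) carrP by blast
    define s1 where "s1 = (SOME v. v \<in> C)"
    define s2 where "s2 = (SOME v. v \<in> D)"
    have "s1 \<in> pres_class A R w1" unfolding s1_def w1(2) by (rule some_class[OF w1(1)])
    then have s1: "s1 \<in> lists (A \<times> UNIV)" "pres_eq R s1 w1" unfolding pres_class_mem by blast+
    have "s2 \<in> pres_class A R w2" unfolding s2_def w2(2) by (rule some_class[OF w2(1)])
    then have s2: "s2 \<in> lists (A \<times> UNIV)" "pres_eq R s2 w2" unfolding pres_class_mem by blast+
    have "C \<otimes>\<^bsub>P\<^esub> D = pres_class A R (s1 @ s2)" unfolding multP pres_mult_def s1_def s2_def ..
    then have "\<phi> (C \<otimes>\<^bsub>P\<^esub> D) = ev B (s1 @ s2)" using phi_cls s1(1) s2(1) by simp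
    also have "\<dots> = ev B s1 \<otimes>\<^bsub>B\<^esub> ev B s2" by (rule Bg.ev_append)
    also have "\<dots> = ev B w1 \<otimes>\<^bsub>B\<^esub> ev B w2"
      using Bg.ev_pres[OF ev_R_all s1(2)] Bg.ev_pres[OF ev_R_all s2(2)] by simp
    also have "\<dots> = \<phi> C \<otimes>\<^bsub>B\<^esub> \<phi> D" using phi_cls[OF w1(1)] phi_cls[OF w2(1)] w1(2) w2(2) by simp
    finally show "\<phi> (C \<otimes>\<^bsub>P\<^esub> D) = \<phi> C \<otimes>\<^bsub>B\<^esub> \<phi> D" .
  qed
  have inj: "inj_on \<phi> (carrier P)"
  proof (rule inj_onI)
    fix C D assume CD: "C \<in> carrier P" "D \<in> carrier P" "\<phi> C = \<phi> D"
    obtain w1 where w1: "w1 \<in> lists (A \<times> UNIV)" "C = pres_class A R w1" using CD(1) carrP by blast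
    obtain w2 where w2: "w2 \<in> lists (A \<times> UNIV)" "D = pres_class A R w2" using CD(2) carrP by blast
    have "ev B w1 = ev B w2" using CD(3) phi_cls[OF w1(1)] phi_cls[OF w2(1)] w1(2) w2(2) by simp
    then have "pres_eq R w1 w2" by (rule injective[OF w1(1) w2(1)])
    then show "C = D" unfolding w1(2) w2(2) by (rule pres_class_eq)
  qed
  have img: "\<phi> ` carrier P = carrier B"
  proof
    show "\<phi> ` carrier P \<subseteq> carrier B" using hom unfolding hom_def Pi_def by blast
  next
    show "carrier B \<subseteq> \<phi> ` carrier P"
    proof
      fix g assume "g \<in> carrier B"
      then obtain xs where xs: "\<forall>y\<in>set xs. isE y" "ev B (wrd xs) = g" using surjective by blast
      have "wrd xs \<in> lists (A \<times> UNIV)" using xs(1) isE_cls unfolding wrd_def by auto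
      then have "pres_class A R (wrd xs) \<in> carrier P" "\<phi> (pres_class A R (wrd xs)) = g"
        using phi_cls xs(2) carrP by auto
      then show "g \<in> \<phi> ` carrier P" by (metis image_eqI)
    qed
  qed
  have "\<phi> \<in> iso P B" unfolding iso_def bij_betw_def using hom inj img by blast
  moreover have "\<forall>e\<in>A. \<phi> (pres_class A R [(e, True)]) = e"
  proof
    fix e assume e: "e \<in> A"
    then have "[(e, True)] \<in> lists (A \<times> UNIV)" by simp
    then show "\<phi> (pres_class A R [(e, True)]) = e" using phi_cls Bg.ev_single A_carrier[OF e] by simp
  qed
  ultimately show ?thesis unfolding P_def by blast
qed



end
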